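(* Fix $d\in\mathbf{N}$. The following statement (C1) is equivalent to statement (C2), and statement (C1') is equivalent to statement (C2'). (C1) For every $N\in\mathbf{N}$: if there exist an orthonormal basis $v_1,\dots,v_{d+1}$ of $\mathbf{R}^{d+1}$ and $x_1,\dots,x_N\in\mathbf{S}^d$ such that $\mu=\frac1N\sum_{i=1}^N\delta_{x_i}$ and $x_i\in\{v_j,-v_j\}$ whenever $i\equiv j \pmod{d+1}$, then $\mu$ maximizes $E_1$ over $\mathcal{P}_N^{=}(\mathbf{S}^d)$. (C2) For every $\alpha>1$ and every $N\in\mathbf{N}$: $\mu$ maximizes $E_\alpha$ over $\mathcal{P}_N^{=}(\mathbf{S}^d)$ if and only if there exist an orthonormal basis $v_1,\dots,v_{d+1}$ of $\mathbf{R}^{d+1}$ and $x_1,\dots,x_N\in\mathbf{S}^d$ such that $\mu=\frac1N\sum_{i=1}^N\delta_{x_i}$ and $x_i\in\{v_j,-v_j\}$ whenever $i\equiv j \pmod{d+1}$. (C1') If there exists an orthonormal basis $v_1,\dots,v_{d+1}$ of $\mathbf{R}^{d+1}$ such that $\mu=\sum_{i=1}^{d+1}(a_i\delta_{v_i}+b_i\delta_{-v_i})$ with $a_i,b_i\ge0$ and $a_i+b_i=\frac1{d+1}$ for all $i$, then $\mu$ maximizes $E_1$ over $\mathcal{P}_{\mathrm{fin}}(\mathbf{S}^d)$. (C2') For every $\alpha>1$: $\mu$ maximizes $E_\alpha$ over $\mathcal{P}_{\mathrm{fin}}(\mathbf{S}^d)$ if and only if there exists an orthonormal basis $v_1,\dots,v_{d+1}$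 of $\mathbf{R}^{d+1}$ such that $\mu=\sum_{i=1}^{d+1}(a_i\delta_{v_i}+b_i\delta_{-v_i})$ with $a_i,b_i\ge0$ and $a_i+b_i=\frac1{d+1}$ for all $i$.
   Context: $\mathbf{S}^d=\{x\in\mathbf{R}^{d+1}:|x|=1\}$, with geodesic distance $\rho(x,y)=\arccos(x\cdot y)$. Let $\Lambda_0(t)=\frac{2}{\pi}\min\{t,\pi-t\}$ for $t\in[0,\pi]$ and $\Lambda(x,y)=\Lambda_0(\rho(x,y))\in[0,1]$. For $\alpha\in[1,\infty)$ and a finite nonnegative Borel measure $\mu$ on $\mathbf{S}^d$, $E_\alpha(\mu)=\frac12\iint\Lambda(x,y)^\alpha\,d\mu(x)\,d\mu(y)$. $\delta_x$ is the Dirac probability measure at $x$. $\mathcal{P}_N^{=}(\mathbf{S}^d)$ is the set of probability measures $\frac1N\sum_{i=1}^N\delta_{x_i}$ with $x_i\in\mathbf{S}^d$ (not necessarily distinct); $\mathcal{P}_{\mathrm{fin}}(\mathbf{S}^d)$ is the set of Borel probability measures on $\mathbf{S}^d$ with finite support. *)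

theory Defs
  imports "HOL-Probability.Probability"
begin

definition Lambda0 :: "real \<Rightarrow> real" where
  "Lambda0 t = 2 / pi * min t (pi - t)"

definition Lambda :: "'a::real_inner \<Rightarrow> 'a \<Rightarrow> real" where
  "Lambda x y = Lambda0 (arccos (x \<bullet> y))"

text \<open>Finitely supported probability measures are represented as pmfs.
  E_alpha(mu) = 1/2 double integral of Lambda^alpha.\<close>
definition energy :: "real \<Rightarrow> 'a::real_inner pmf \<Rightarrow> real" where
  "energy \<alpha> \<mu> = 1/2 * (\<integral>x. (\<integral>y. Lambda x y powr \<alpha> \<partial>measure_pmf \<mu>) \<partial>measure_pmf \<mu>)"

definition P_eq :: "nat \<Rightarrow> 'a::real_normed_vector pmf set" where
  "P_eq N = {map_pmf x (pmf_of_set {1..N}) | x. \<forall>i\<in>{1..N}. x i \<in> sphere 0 1}"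

definition P_fin :: "'a::real_normed_vector pmf set" where
  "P_fin = {\<mu>. finite (set_pmf \<mu>) \<and> set_pmf \<mu> \<subseteq> sphere 0 1}"

definition maximizes :: "real \<Rightarrow> 'a::real_inner pmf set \<Rightarrow> 'a pmf \<Rightarrow> bool" where
  "maximizes \<alpha> S \<mu> \<longleftrightarrow> \<mu> \<in> S \<and> (\<forall>\<nu>\<in>S. energy \<alpha> \<nu> \<le> energy \<alpha> \<mu>)"

definition orthonormal_basis_seq :: "nat \<Rightarrow> (nat \<Rightarrow> 'a::euclidean_space) \<Rightarrow> bool" where
  "orthonormal_basis_seq n v \<longleftrightarrow>
     (\<forall>i\<in>{1..n}. \<forall>j\<in>{1..n}. v i \<bullet> v j = (if i = j then 1 else 0)) \<and> span (v ` {1..n}) = UNIV"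

text \<open>The configuration condition of (C1)/(C2), with d+1 = DIM('a).\<close>
definition cross_config :: "nat \<Rightarrow> 'a::euclidean_space pmf \<Rightarrow> bool" where
  "cross_config N \<mu> \<longleftrightarrow>
     (\<exists>v x. orthonormal_basis_seq DIM('a) v \<and> (\<forall>i\<in>{1..N}. x i \<in> sphere 0 1) \<and>
        \<mu> = map_pmf x (pmf_of_set {1..N}) \<and>
        (\<forall>i\<in>{1..N}. \<forall>j\<in>{1..DIM('a)}. i mod DIM('a) = j mod DIM('a) \<longrightarrow> x i \<in> {v j, - v j}))"

definition cross_weights :: "'a::euclidean_space pmf \<Rightarrow> bool" where
  "cross_weights \<mu> \<longleftrightarrow>
     (\<exists>v a b. orthonormal_basis_seq DIM('a) v \<and>
        (\<forall>i\<in>{1..DIM('a)}. a i \<ge> 0 \<and> b i \<ge> 0 \<and> a i + b i = 1 / real DIM('a)) \<and>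
        (\<forall>x. pmf \<mu> x = (\<Sum>i=1..DIM('a). a i * indicator {v i} x + b i * indicator {- v i} x)))"

end

theory Submission
  imports Defs
begin

lemma Lambda0_range: "0 \<le> t \<Longrightarrow> t \<le> pi \<Longrightarrow> 0 \<le> Lambda0 t \<and> Lambda0 t \<le> 1"
  unfolding Lambda0_def using pi_gt_zero
  by (auto simp: min_def field_simps)

lemma inner_sphere_bounds:
  fixes x y :: "'a::euclidean_space"
  assumes "norm x = 1" "norm y = 1"
  shows "-1 \<le> x \<bullet> y \<and> x \<bullet> y \<le> 1"
proof -
  have "\<bar>x \<bullet> y\<bar> \<le> 1" using Cauchy_Schwarz_ineq2[of x y] assms by simp
  then show ?thesis by linarith
qed

lemma Lambda_range:
  fixes x y :: "'a::euclidean_space"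
  assumes "norm x = 1" "norm y = 1"
  shows "0 \<le> Lambda x y \<and> Lambda x y \<le> 1"
  unfolding Lambda_def
  using inner_sphere_bounds[OF assms] arccos_lbound arccos_ubound Lambda0_range by blast

lemma Lambda_same: fixes x :: "'a::euclidean_space" assumes "norm x = 1"
  shows "Lambda x x = 0"
proof -
  have "x \<bullet> x = 1" using assms by (simp add: power2_norm_eq_inner[symmetric])
  then show ?thesis by (simp add: Lambda_def Lambda0_def)
qed

lemma Lambda_neg: fixes x :: "'a::euclidean_space" assumes "norm x = 1"
  shows "Lambda x (-x) = 0"
proof -
  have "x \<bullet> x = 1" using assms by (simp add: power2_norm_eq_inner[symmetric])
  then show ?thesis by (simp add: Lambda_def Lambda0_def)
qed

lemma Lambda_orth: fixes x y :: "'a::euclidean_space" assumes "x \<bullet> y = 0"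
  shows "Lambda x y = 1"
  using assms by (simp add: Lambda_def Lambda0_def min_def)

lemma Lambda_zero_cases:
  fixes x y :: "'a::euclidean_space"
  assumes "norm x = 1" "norm y = 1" "Lambda x y = 0"
  shows "y = x \<or> y = -x"
proof -
  have b: "-1 \<le> x \<bullet> y" "x \<bullet> y \<le> 1" using inner_sphere_bounds[OF assms(1,2)] by auto
  define t where "t = arccos (x \<bullet> y)"
  have t: "0 \<le> t" "t \<le> pi" "cos t = x \<bullet> y" using b by (auto simp: t_def arccos_lbound arccos_ubound)
  have "min t (pi - t) = 0" using assms(3) by (simp add: Lambda_def Lambda0_def t_def[symmetric])
  then have "t = 0 \<or> t = pi" by (auto simp: min_def split: if_splits)
  then have disj: "x \<bullet> y = 1 \<or> x \<bullet> y = -1" using t by auto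
  have "x \<bullet> x = 1" "y \<bullet> y = 1" using assms by (simp_all add: power2_norm_eq_inner[symmetric])
  from disj show ?thesis
  proof
    assume h: "x \<bullet> y = 1"
    have "(y - x) \<bullet> (y - x) = 0" using h \<open>x \<bullet> x = 1\<close> \<open>y \<bullet> y = 1\<close>
      by (simp add: inner_diff_left inner_diff_right inner_commute)
    then show ?thesis by simp
  next
    assume h: "x \<bullet> y = -1"
    have "(y + x) \<bullet> (y + x) = 0" using h \<open>x \<bullet> x = 1\<close> \<open>y \<bullet> y = 1\<close>
      by (simp add: inner_add_left inner_add_right inner_commute)
    then have "y + x = 0" by simp
    then show ?thesis by (simp add: eq_neg_iff_add_eq_0)
  qed
qed

lemma Lambda_one_case:
  fixes x y :: "'a::euclidean_space"
  assumes "norm x = 1" "norm y = 1" "Lambda x y = 1"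
  shows "x \<bullet> y = 0"
proof -
  have b: "-1 \<le> x \<bullet> y" "x \<bullet> y \<le> 1" using inner_sphere_bounds[OF assms(1,2)] by auto
  define t where "t = arccos (x \<bullet> y)"
  have t: "0 \<le> t" "t \<le> pi" "cos t = x \<bullet> y" using b by (auto simp: t_def arccos_lbound arccos_ubound)
  have "Lambda0 t = 1" using assms(3) unfolding Lambda_def t_def by simp
  then have "2 / pi * min t (pi - t) = 1" unfolding Lambda0_def .
  moreover have "\<And>m. 2/pi*m = 1 \<Longrightarrow> m = pi/2" using pi_gt_zero by (auto simp: field_simps)
  ultimately have m: "min t (pi - t) = pi / 2" by blast
  have "t = pi / 2"
  proof (cases "t \<le> pi - t")
    case True then show ?thesis using m by (simp add: min_def)
  next
    case False then show ?thesis using m by (simp add: min_def)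
  qed
  then show ?thesis using t(3) cos_pi_half by metis
qed

lemma powr_le_self: "0 \<le> (l::real) \<Longrightarrow> l \<le> 1 \<Longrightarrow> 1 \<le> a \<Longrightarrow> l powr a \<le> l"
  using powr_mono'[of 1 a l] by simp

lemma powr_eq_self_cases:
  assumes "0 \<le> (l::real)" "l \<le> 1" "1 < a" "l powr a = l"
  shows "l = 0 \<or> l = 1"
proof (rule ccontr)
  assume "\<not> (l = 0 \<or> l = 1)"
  then have l: "0 < l" "l < 1" using assms by auto
  have "l powr a < l powr 1" using l assms(3) by (intro powr_less_mono') auto
  then show False using assms(4) l by simp
qed

lemma powr_01: "(l::real) = 0 \<or> l = 1 \<Longrightarrow> 0 < a \<Longrightarrow> l powr a = l"
  by auto

definition goodset :: "'a::real_inner set \<Rightarrow> bool" where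
  "goodset S \<longleftrightarrow> (\<forall>x\<in>S. \<forall>y\<in>S. y = x \<or> y = -x \<or> x \<bullet> y = 0)"

lemma energy_sum:
  fixes \<mu> :: "'a::euclidean_space pmf"
  assumes "finite A" "set_pmf \<mu> \<subseteq> A"
  shows "energy \<alpha> \<mu> = 1/2 * (\<Sum>x\<in>A. \<Sum>y\<in>A. pmf \<mu> x * pmf \<mu> y * Lambda x y powr \<alpha>)"
proof -
  have i: "(\<integral>y. Lambda x y powr \<alpha> \<partial>measure_pmf \<mu>) = (\<Sum>y\<in>A. pmf \<mu> y * Lambda x y powr \<alpha>)" for x
    using integral_measure_pmf[OF assms(1), of \<mu> "\<lambda>y. Lambda x y powr \<alpha>"] assms(2) by auto
  have "(\<integral>x. (\<integral>y. Lambda x y powr \<alpha> \<partial>measure_pmf \<mu>) \<partial>measure_pmf \<mu>)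
      = (\<Sum>x\<in>A. pmf \<mu> x * (\<Sum>y\<in>A. pmf \<mu> y * Lambda x y powr \<alpha>))"
    unfolding i using integral_measure_pmf[OF assms(1), of \<mu> "\<lambda>x. (\<Sum>y\<in>A. pmf \<mu> y * Lambda x y powr \<alpha>)"] assms(2)
    by auto
  then show ?thesis unfolding energy_def by (simp add: sum_distrib_left mult.assoc)
qed

lemma energy_le_1:
  fixes \<mu> :: "'a::euclidean_space pmf"
  assumes "\<mu> \<in> P_fin" "1 \<le> a"
  shows "energy a \<mu> \<le> energy 1 \<mu>"
proof -
  have fin: "finite (set_pmf \<mu>)" and sph: "set_pmf \<mu> \<subseteq> sphere 0 1" using assms by (auto simp: P_fin_def)
  have "(\<Sum>x\<in>set_pmf \<mu>. \<Sum>y\<in>set_pmf \<mu>. pmf \<mu> x * pmf \<mu> y * Lambda x y powr a)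
     \<le> (\<Sum>x\<in>set_pmf \<mu>. \<Sum>y\<in>set_pmf \<mu>. pmf \<mu> x * pmf \<mu> y * Lambda x y powr 1)"
  proof (intro sum_mono)
    fix x y assume "x \<in> set_pmf \<mu>" "y \<in> set_pmf \<mu>"
    then have "norm x = 1" "norm y = 1" using sph by auto
    then have L: "0 \<le> Lambda x y" "Lambda x y \<le> 1" using Lambda_range by blast+
    show "pmf \<mu> x * pmf \<mu> y * Lambda x y powr a \<le> pmf \<mu> x * pmf \<mu> y * Lambda x y powr 1"
      using powr_le_self[OF L assms(2)] L by (intro mult_left_mono) auto
  qed
  then show ?thesis
    unfolding energy_sum[OF fin order_refl, of a] energy_sum[OF fin order_refl, of 1] by simp
qed

lemma energy_eq_good:
  fixes \<mu> :: "'a::euclidean_space pmf"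
  assumes "\<mu> \<in> P_fin" "1 < a" "energy a \<mu> = energy 1 \<mu>"
  shows "goodset (set_pmf \<mu>)"
proof -
  have fin: "finite (set_pmf \<mu>)" and sph: "set_pmf \<mu> \<subseteq> sphere 0 1" using assms by (auto simp: P_fin_def)
  define S where "S = set_pmf \<mu>"
  define f where "f x y = pmf \<mu> x * pmf \<mu> y * (Lambda x y powr 1 - Lambda x y powr a)" for x y
  have fnn: "0 \<le> f x y" if "x \<in> S" "y \<in> S" for x y
  proof -
    have "norm x = 1" "norm y = 1" using sph that by (auto simp: S_def)
    then have L: "0 \<le> Lambda x y" "Lambda x y \<le> 1" using Lambda_range by blast+
    show ?thesis unfolding f_def using powr_le_self[OF L, of a] assms(2) L by (intro mult_nonneg_nonneg) auto
  qed
  have "(\<Sum>x\<in>S. \<Sum>y\<in>S. f x y) = 2 * energy 1 \<mu> - 2 * energy a \<mu>"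
    unfolding energy_sum[OF fin order_refl, of a] energy_sum[OF fin order_refl, of 1] f_def S_def
    by (simp add: sum_subtractf right_diff_distrib)
  then have z: "(\<Sum>x\<in>S. \<Sum>y\<in>S. f x y) = 0" using assms(3) by simp
  have "\<forall>x\<in>S. (\<Sum>y\<in>S. f x y) = 0"
    using z fin fnn by (subst (asm) sum_nonneg_eq_0_iff) (auto simp: S_def intro: sum_nonneg)
  have f0: "\<forall>x\<in>S. \<forall>y\<in>S. f x y = 0"
  proof (intro ballI)
    fix x y assume "x \<in> S" "y \<in> S"
    then have "(\<Sum>y\<in>S. f x y) = 0" using \<open>\<forall>x\<in>S. (\<Sum>y\<in>S. f x y) = 0\<close> by blast
    then show "f x y = 0" using fin fnn \<open>x \<in> S\<close> \<open>y \<in> S\<close>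
      by (subst (asm) sum_nonneg_eq_0_iff) (auto simp: S_def)
  qed
  show ?thesis unfolding goodset_def S_def[symmetric]
  proof (intro ballI)
    fix x y assume xy: "x \<in> S" "y \<in> S"
    then have n: "norm x = 1" "norm y = 1" using sph by (auto simp: S_def)
    then have L: "0 \<le> Lambda x y" "Lambda x y \<le> 1" using Lambda_range by blast+
    have "pmf \<mu> x > 0" "pmf \<mu> y > 0" using xy by (auto simp: S_def pmf_positive)
    moreover have "f x y = 0" using f0 xy by blast
    ultimately have "Lambda x y powr 1 - Lambda x y powr a = 0" unfolding f_def by simp
    then have "Lambda x y powr a = Lambda x y" using L by (simp add: powr_one)
    then have "Lambda x y = 0 \<or> Lambda x y = 1" using powr_eq_self_cases L assms(2) by blast
    then show "y = x \<or> y = - x \<or> x \<bullet> y = 0"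
      using Lambda_zero_cases[OF n] Lambda_one_case[OF n] by blast
  qed
qed

lemma energy_tendsto:
  fixes \<mu> :: "'a::euclidean_space pmf"
  assumes "\<mu> \<in> P_fin"
  shows "((\<lambda>a. energy a \<mu>) \<longlongrightarrow> energy 1 \<mu>) (at_right 1)"
proof -
  have fin: "finite (set_pmf \<mu>)" using assms by (auto simp: P_fin_def)
  have t: "((\<lambda>a. l powr a) \<longlongrightarrow> l powr 1) (at_right 1)" for l :: real
  proof (cases "l = 0")
    case True then show ?thesis by simp
  next
    case False
    then show ?thesis by (intro tendsto_powr tendsto_const tendsto_ident_at) auto
  qed
  show ?thesis
    unfolding energy_sum[OF fin order_refl]
    by (intro tendsto_intros t)
qed

lemma energy_limit_bound:
  fixes \<nu> :: "'a::euclidean_space pmf"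
  assumes "\<nu> \<in> P_fin" "\<And>a. 1 < a \<Longrightarrow> energy a \<nu> \<le> c"
  shows "energy 1 \<nu> \<le> c"
proof (rule tendsto_upperbound[OF energy_tendsto[OF assms(1)]])
  show "\<forall>\<^sub>F a in at_right 1. energy a \<nu> \<le> c"
    unfolding eventually_at_right_field using assms(2) by (intro exI[of _ 2]) auto
qed simp

definition orthoset :: "'a::euclidean_space set \<Rightarrow> bool" where
  "orthoset B \<longleftrightarrow> finite B \<and> (\<forall>b\<in>B. norm b = 1) \<and> (\<forall>b\<in>B. \<forall>c\<in>B. b \<noteq> c \<longrightarrow> b \<bullet> c = 0)"

lemma orthoset_inner: "orthoset B \<Longrightarrow> b \<in> B \<Longrightarrow> c \<in> B \<Longrightarrow> b \<bullet> c = (if b = c then 1 else 0)"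
  unfolding orthoset_def by (auto simp: dot_square_norm)

lemma orthoset_neg: assumes "orthoset B" "b \<in> B" "c \<in> B" shows "b \<noteq> - c"
proof
  assume h: "b = - c"
  have "b \<bullet> c = - (c \<bullet> c)" using h by simp
  also have "c \<bullet> c = 1" using orthoset_inner[OF assms(1,3,3)] by simp
  finally have "b \<bullet> c = -1" .
  then show False using orthoset_inner[OF assms] by (auto split: if_splits)
qed

lemma sum_pm:
  fixes h :: "'a::euclidean_space \<Rightarrow> real"
  assumes "orthoset B"
  shows "(\<Sum>x\<in>B \<union> uminus ` B. h x) = (\<Sum>b\<in>B. h b + h (- b))"
proof -
  have fin: "finite B" using assms by (simp add: orthoset_def)
  have dis: "B \<inter> uminus ` B = {}" using orthoset_neg[OF assms] by auto
  have "(\<Sum>x\<in>B \<union> uminus ` B. h x) = (\<Sum>x\<in>B. h x) + (\<Sum>x\<in>uminus ` B. h x)"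
    using fin dis by (simp add: sum.union_disjoint)
  also have "(\<Sum>x\<in>uminus ` B. h x) = (\<Sum>b\<in>B. h (- b))"
    by (subst sum.reindex) (auto simp: inj_on_def)
  finally show ?thesis by (simp add: sum.distrib)
qed

lemma energy_orthoset:
  fixes \<mu> :: "'a::euclidean_space pmf"
  assumes B: "orthoset B" and supp: "set_pmf \<mu> \<subseteq> B \<union> uminus ` B" and a: "0 < a"
  shows "energy a \<mu> = 1/2 * (1 - (\<Sum>b\<in>B. (pmf \<mu> b + pmf \<mu> (-b))^2))"
proof -
  define T where "T = B \<union> uminus ` B"
  have finB: "finite B" using B by (simp add: orthoset_def)
  then have finT: "finite T" by (simp add: T_def)
  define m where "m b = pmf \<mu> b + pmf \<mu> (-b)" for b
  define g where "g x y = pmf \<mu> x * pmf \<mu> y * Lambda x y powr a" for x y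
  have e: "energy a \<mu> = 1/2 * (\<Sum>x\<in>T. \<Sum>y\<in>T. g x y)"
    using energy_sum[OF finT] supp by (simp add: T_def g_def)
  have key: "g b c + g b (-c) + g (-b) c + g (-b) (-c) = (if b = c then 0 else m b * m c)"
    if bc: "b \<in> B" "c \<in> B" for b c
  proof (cases "b = c")
    case True
    have n: "norm b = 1" using B bc by (auto simp: orthoset_def)
    then have "norm (-b) = 1" by simp
    have "Lambda b b = 0" "Lambda b (-b) = 0" "Lambda (-b) (-b) = 0" "Lambda (-b) b = 0"
      using Lambda_same[OF n] Lambda_neg[OF n] Lambda_same[OF \<open>norm (-b) = 1\<close>]
        Lambda_neg[OF \<open>norm (-b) = 1\<close>] by auto
    then show ?thesis using True by (simp add: g_def)
  next
    case False
    have "b \<bullet> c = 0" using orthoset_inner[OF B bc] False by simp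
    then have "Lambda b c = 1" "Lambda b (-c) = 1" "Lambda (-b) c = 1" "Lambda (-b) (-c) = 1"
      by (auto intro!: Lambda_orth)
    then show ?thesis using False by (simp add: g_def m_def algebra_simps)
  qed
  have "(\<Sum>x\<in>T. \<Sum>y\<in>T. g x y) = (\<Sum>b\<in>B. (\<Sum>c\<in>B. g b c + g b (-c)) + (\<Sum>c\<in>B. g (-b) c + g (-b) (-c)))"
    unfolding T_def sum_pm[OF B] ..
  also have "\<dots> = (\<Sum>b\<in>B. \<Sum>c\<in>B. g b c + g b (-c) + g (-b) c + g (-b) (-c))"
    by (simp only: sum.distrib[symmetric] add.assoc)
  also have "\<dots> = (\<Sum>b\<in>B. \<Sum>c\<in>B. (if b = c then 0 else m b * m c))"
    using key by (intro sum.cong refl) auto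
  also have "\<dots> = (\<Sum>b\<in>B. (\<Sum>c\<in>B. m b * m c) - m b * m b)"
  proof (intro sum.cong refl)
    fix b assume "b \<in> B"
    have "(\<Sum>c\<in>B. (if b = c then 0 else m b * m c)) = (\<Sum>c\<in>B. m b * m c - (if b = c then m b * m c else 0))"
      by (intro sum.cong) auto
    also have "\<dots> = (\<Sum>c\<in>B. m b * m c) - m b * m b"
      using \<open>b \<in> B\<close> finB by (simp add: sum_subtractf)
    finally show "(\<Sum>c\<in>B. (if b = c then 0 else m b * m c)) = (\<Sum>c\<in>B. m b * m c) - m b * m b" .
  qed
  also have "\<dots> = (\<Sum>b\<in>B. m b) * (\<Sum>c\<in>B. m c) - (\<Sum>b\<in>B. (m b)^2)"
    by (simp only: sum_subtractf sum_product power2_eq_square)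
  finally have G: "(\<Sum>x\<in>T. \<Sum>y\<in>T. g x y) = (\<Sum>b\<in>B. m b) * (\<Sum>c\<in>B. m c) - (\<Sum>b\<in>B. (m b)^2)" .
  have S1: "(\<Sum>b\<in>B. m b) = 1"
  proof -
    have "(\<Sum>b\<in>B. m b) = (\<Sum>x\<in>T. pmf \<mu> x)" unfolding T_def sum_pm[OF B] m_def ..
    also have "\<dots> = 1" using sum_pmf_eq_1[OF finT] supp by (simp add: T_def)
    finally show ?thesis .
  qed
  have "(\<Sum>x\<in>T. \<Sum>y\<in>T. g x y) = 1 - (\<Sum>b\<in>B. (m b)^2)" using G S1 by simp
  then show ?thesis using e by (simp only: m_def)
qed

lemma good_rep:
  fixes S :: "'a::real_vector set"
  assumes "finite S" "0 \<notin> S"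
  shows "\<exists>R\<subseteq>S. S \<subseteq> R \<union> uminus ` R \<and> (\<forall>x\<in>R. - x \<notin> R)"
  using assms
proof (induction S rule: finite_induct)
  case empty show ?case by (rule exI[of _ "{}"]) simp
next
  case (insert x S)
  then have "0 \<notin> S" by blast
  then obtain R where R: "R \<subseteq> S" "S \<subseteq> R \<union> uminus ` R" "\<forall>x\<in>R. - x \<notin> R"
    using insert.IH by blast
  show ?case
  proof (cases "x \<in> R \<union> uminus ` R")
    case True
    have A: "R \<subseteq> insert x S" "insert x S \<subseteq> R \<union> uminus ` R" using R True by blast+
    show ?thesis by (rule exI[of _ R]) (intro conjI A R(3))
  next
    case False
    have "x \<noteq> 0" using insert.prems by blast
    have "- x \<noteq> x"
    proof
      assume "- x = x"
      then have "x + x = 0" by (metis add.right_inverse)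
      then have "(2::real) *\<^sub>R x = 0" by (simp add: scaleR_2)
      then show False using \<open>x \<noteq> 0\<close> by simp
    qed
    have nx: "- x \<notin> R"
    proof
      assume "- x \<in> R"
      then have "x \<in> uminus ` R" by (metis image_eqI minus_minus)
      then show False using False by blast
    qed
    have "\<forall>y\<in>insert x R. - y \<notin> insert x R"
    proof
      fix y assume y: "y \<in> insert x R"
      show "- y \<notin> insert x R"
      proof (cases "y = x")
        case True then show ?thesis using nx \<open>- x \<noteq> x\<close> by simp
      next
        case F: False
        then have "y \<in> R" using y by blast
        have "- y \<noteq> x"
        proof
          assume "- y = x"
          then have "x \<in> uminus ` R" using \<open>y \<in> R\<close> by blast
          then show False using False by blast
        qed
        then show ?thesis using R(3) \<open>y \<in> R\<close> by blast
      qed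
    qed
    moreover have "insert x R \<subseteq> insert x S" "insert x S \<subseteq> insert x R \<union> uminus ` insert x R"
      using R(1,2) by auto
    ultimately show ?thesis by (intro exI[of _ "insert x R"] conjI)
  qed
qed

lemma ortho_extend:
  fixes R :: "'a::euclidean_space set"
  assumes R: "orthoset R"
  shows "\<exists>B. orthoset B \<and> R \<subseteq> B \<and> card B = DIM('a) \<and> span B = UNIV"
proof -
  define W where "W = {y. \<forall>r\<in>R. orthogonal r y}"
  have "subspace W" unfolding W_def by (rule subspace_orthogonal_to_vectors)
  then obtain C where C: "C \<subseteq> W" "pairwise orthogonal C" "\<And>x. x \<in> C \<Longrightarrow> norm x = 1"
    "independent C" "span C = W"
    by (rule orthonormal_basis_subspace) blast
  have finR: "finite R" using R by (simp add: orthoset_def)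
  have finC: "finite C" using C(4) by (rule finiteI_independent)
  define B where "B = R \<union> C"
  have oB: "orthoset B"
    unfolding orthoset_def B_def
  proof (intro conjI ballI impI)
    show "finite (R \<union> C)" using finR finC by simp
  next
    fix b assume "b \<in> R \<union> C" then show "norm b = 1" using R C(3) by (auto simp: orthoset_def)
  next
    fix b c assume bc: "b \<in> R \<union> C" "c \<in> R \<union> C" "b \<noteq> c"
    show "b \<bullet> c = 0"
    proof (cases "b \<in> R")
      case True
      show ?thesis
      proof (cases "c \<in> R")
        case True then show ?thesis using \<open>b \<in> R\<close> bc R by (auto simp: orthoset_def)
      next
        case False then have "c \<in> W" using bc C(1) by auto
        then show ?thesis using \<open>b \<in> R\<close> by (auto simp: W_def orthogonal_def)
      qed
    next
      case False then have "b \<in> W" "b \<in> C" using bc C(1) by auto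
      show ?thesis
      proof (cases "c \<in> R")
        case True then show ?thesis using \<open>b \<in> W\<close> by (auto simp: W_def orthogonal_def inner_commute)
      next
        case False then have "c \<in> C" using bc by auto
        then show ?thesis using C(2) \<open>b \<in> C\<close> bc(3) by (auto simp: pairwise_def orthogonal_def)
      qed
    qed
  qed
  have sp: "span B = UNIV"
  proof -
    have "x \<in> span B" for x
    proof -
      define p where "p = (\<Sum>r\<in>R. (x \<bullet> r) *\<^sub>R r)"
      have "p \<in> span B" unfolding p_def B_def
        by (intro span_sum span_scale span_base) auto
      moreover have "x - p \<in> W"
        unfolding W_def orthogonal_def
      proof (intro CollectI ballI)
        fix r' assume "r' \<in> R"
        have "r' \<bullet> p = (\<Sum>r\<in>R. (x \<bullet> r) * (r' \<bullet> r))" by (simp add: p_def inner_sum_right)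
        also have "\<dots> = (\<Sum>r\<in>R. (if r' = r then x \<bullet> r else 0))"
          using orthoset_inner[OF R \<open>r' \<in> R\<close>] by (intro sum.cong) auto
        also have "\<dots> = x \<bullet> r'" using \<open>r' \<in> R\<close> finR by simp
        finally show "r' \<bullet> (x - p) = 0" by (simp add: inner_diff_right inner_commute)
      qed
      then have "x - p \<in> span B" using C(5) span_mono[of C B] by (auto simp: B_def)
      ultimately have "(x - p) + p \<in> span B" by (rule span_add[rotated])
      then show ?thesis by simp
    qed
    then show ?thesis by auto
  qed
  have "independent B"
  proof (rule pairwise_orthogonal_independent)
    show "pairwise orthogonal B" using oB by (auto simp: pairwise_def orthogonal_def orthoset_def)
    show "0 \<notin> B" using oB by (auto simp: orthoset_def)
  qed
  then have "card B = DIM('a)" using dim_span_eq_card_independent[of B] sp dim_UNIV by simp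
  then show ?thesis using oB sp by (intro exI[of _ B]) (auto simp: B_def)
qed

lemma good_to_basis:
  fixes S :: "'a::euclidean_space set"
  assumes "finite S" "S \<subseteq> sphere 0 1" "goodset S"
  shows "\<exists>B. orthoset B \<and> card B = DIM('a) \<and> span B = UNIV \<and> S \<subseteq> B \<union> uminus ` B"
proof -
  have "0 \<notin> S" using assms(2) by auto
  then obtain R where R: "R \<subseteq> S" "S \<subseteq> R \<union> uminus ` R" "\<forall>x\<in>R. - x \<notin> R"
    using good_rep[OF assms(1)] by blast
  have "orthoset R" unfolding orthoset_def
  proof (intro conjI ballI impI)
    show "finite R" using R(1) assms(1) by (rule finite_subset)
  next
    fix b assume "b \<in> R" then show "norm b = 1" using R(1) assms(2) by auto
  next
    fix b c assume bc: "b \<in> R" "c \<in> R" "b \<noteq> c"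
    then have "b \<in> S" "c \<in> S" using R(1) by auto
    then have "c = b \<or> c = - b \<or> b \<bullet> c = 0" using assms(3) unfolding goodset_def by blast
    moreover have "c \<noteq> - b" using R(3) bc by auto
    ultimately show "b \<bullet> c = 0" using bc(3) by auto
  qed
  then obtain B where B: "orthoset B" "R \<subseteq> B" "card B = DIM('a)" "span B = UNIV"
    using ortho_extend by blast
  have "uminus ` R \<subseteq> uminus ` B" using B(2) by (rule image_mono)
  then have "S \<subseteq> B \<union> uminus ` B" using R(2) B(2) by blast
  then show ?thesis using B by (intro exI[of _ B] conjI)
qed

lemma obs_inner:
  assumes "orthonormal_basis_seq n v" "i \<in> {1..n}" "j \<in> {1..n}"
  shows "v i \<bullet> v j = (if i = j then 1 else 0)"
  using assms unfolding orthonormal_basis_seq_def by blast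

lemma obs_inj: assumes "orthonormal_basis_seq n v" shows "inj_on v {1..n}"
proof (rule inj_onI)
  fix i j assume ij: "i \<in> {1..n}" "j \<in> {1..n}" "v i = v j"
  have "v i \<bullet> v j = v j \<bullet> v j" using ij by simp
  then show "i = j" using obs_inner[OF assms ij(1,2)] obs_inner[OF assms ij(2,2)] by (auto split: if_splits)
qed

lemma obs_orthoset: assumes "orthonormal_basis_seq n v" shows "orthoset (v ` {1..n})"
  unfolding orthoset_def
proof (intro conjI ballI impI)
  show "finite (v ` {1..n})" by simp
next
  fix b assume "b \<in> v ` {1..n}"
  then obtain i where i: "i \<in> {1..n}" "b = v i" by auto
  have "b \<bullet> b = 1" using obs_inner[OF assms i(1) i(1)] i by simp
  then show "norm b = 1" by (simp add: norm_eq_sqrt_inner)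
next
  fix b c assume "b \<in> v ` {1..n}" "c \<in> v ` {1..n}" "b \<noteq> c"
  then obtain i j where "i \<in> {1..n}" "j \<in> {1..n}" "b = v i" "c = v j" by auto
  then show "b \<bullet> c = 0" using obs_inner[OF assms, of i j] \<open>b \<noteq> c\<close> by auto
qed

lemma obs_card: assumes "orthonormal_basis_seq n v" shows "card (v ` {1..n}) = n"
  using card_image[OF obs_inj[OF assms]] by simp

lemma sum_ind_hit:
  assumes "inj_on w I" "i \<in> I" "finite I"
  shows "(\<Sum>j\<in>I. f j * indicator {w j} (w i)) = (f i :: real)"
proof -
  have "(\<Sum>j\<in>I. f j * indicator {w j} (w i)) = (\<Sum>j\<in>I. if j = i then f j else 0)"
  proof (intro sum.cong refl)
    fix j assume "j \<in> I"
    then have "w i = w j \<longleftrightarrow> j = i" using assms(1,2) by (auto dest: inj_onD)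
    then show "f j * indicator {w j} (w i) = (if j = i then f j else 0)" by (auto simp: indicator_def)
  qed
  also have "\<dots> = f i" using assms(2,3) by simp
  finally show ?thesis .
qed

lemma sum_ind_miss:
  assumes "x \<notin> w ` I"
  shows "(\<Sum>j\<in>I. f j * indicator {w j} x) = (0 :: real)"
  using assms by (intro sum.neutral) (auto simp: indicator_def)

lemma inj_neg: assumes "inj_on (v :: nat \<Rightarrow> 'a::real_vector) I" shows "inj_on (\<lambda>i. - v i) I"
proof (rule inj_onI)
  fix i j assume ij: "i \<in> I" "j \<in> I" "- v i = - v j"
  then have "v i = v j" by simp
  then show "i = j" using inj_onD[OF assms _ ij(1,2)] by blast
qed

lemma obs_span: assumes "orthonormal_basis_seq n v" shows "span (v ` {1..n}) = UNIV"
  using assms unfolding orthonormal_basis_seq_def by blast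

lemma pmf_formula_gen:
  fixes \<mu> :: "'a::euclidean_space pmf"
  assumes v: "orthonormal_basis_seq n v" and supp: "set_pmf \<mu> \<subseteq> v ` {1..n} \<union> uminus ` v ` {1..n}"
  shows "pmf \<mu> x = (\<Sum>i=1..n. pmf \<mu> (v i) * indicator {v i} x + pmf \<mu> (- v i) * indicator {- v i} x)"
proof -
  have inj: "inj_on v {1..n}" by (rule obs_inj[OF v])
  have injm: "inj_on (\<lambda>i. - v i) {1..n}" using inj by (rule inj_neg)
  have oB: "orthoset (v ` {1..n})" by (rule obs_orthoset[OF v])
  have split: "(\<Sum>i=1..n. pmf \<mu> (v i) * indicator {v i} x + pmf \<mu> (- v i) * indicator {- v i} x)
    = (\<Sum>i=1..n. pmf \<mu> (v i) * indicator {v i} x) + (\<Sum>i=1..n. pmf \<mu> (- v i) * indicator {- v i} x)"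
    by (simp add: sum.distrib)
  show ?thesis
  proof (cases "x \<in> v ` {1..n}")
    case True
    then obtain i where i: "i \<in> {1..n}" "x = v i" by auto
    have "x \<notin> (\<lambda>i. - v i) ` {1..n}"
    proof
      assume "x \<in> (\<lambda>i. - v i) ` {1..n}"
      then obtain j where j: "j \<in> {1..n}" "x = - v j" by auto
      have "v i \<in> v ` {1..n}" "v j \<in> v ` {1..n}" using i(1) j(1) by auto
      then have "v i \<noteq> - v j" by (rule orthoset_neg[OF oB])
      then show False using i(2) j(2) by simp
    qed
    then have B: "(\<Sum>j=1..n. pmf \<mu> (- v j) * indicator {- v j} x) = 0"
      by (rule sum_ind_miss)
    have A: "(\<Sum>j=1..n. pmf \<mu> (v j) * indicator {v j} x) = pmf \<mu> x"
      using sum_ind_hit[OF inj i(1), of "\<lambda>j. pmf \<mu> (v j)"] i(2) by simp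
    show ?thesis unfolding split A B by simp
  next
    case False
    note F = False
    have A: "(\<Sum>j=1..n. pmf \<mu> (v j) * indicator {v j} x) = 0"
      using F by (rule sum_ind_miss)
    show ?thesis
    proof (cases "x \<in> (\<lambda>i. - v i) ` {1..n}")
      case True
      then obtain i where i: "i \<in> {1..n}" "x = - v i" by auto
      have B: "(\<Sum>j = 1..n. pmf \<mu> (- v j) * indicator {- v j} x) = pmf \<mu> x"
        using sum_ind_hit[OF injm i(1), of "\<lambda>j. pmf \<mu> (- v j)"] i(2) by simp
      show ?thesis unfolding split A B by simp
    next
      case False
      then have B: "(\<Sum>j=1..n. pmf \<mu> (- v j) * indicator {- v j} x) = 0"
        by (rule sum_ind_miss)
      have "x \<notin> set_pmf \<mu>" using supp F False by auto
      then have "pmf \<mu> x = 0" by (simp add: set_pmf_eq)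
      then show ?thesis unfolding split A B by simp
    qed
  qed
qed

lemma cross_weights_D:
  fixes \<mu> :: "'a::euclidean_space pmf"
  assumes "cross_weights \<mu>"
  obtains v where "orthonormal_basis_seq DIM('a) v"
    "set_pmf \<mu> \<subseteq> v ` {1..DIM('a)} \<union> uminus ` v ` {1..DIM('a)}"
    "\<And>i. i \<in> {1..DIM('a)} \<Longrightarrow> pmf \<mu> (v i) + pmf \<mu> (- v i) = 1 / real DIM('a)"
proof -
  obtain v a b where v: "orthonormal_basis_seq DIM('a) v"
    and ab: "\<forall>i\<in>{1..DIM('a)}. a i \<ge> 0 \<and> b i \<ge> 0 \<and> a i + b i = 1 / real DIM('a)"
    and p: "\<forall>x. pmf \<mu> x = (\<Sum>i=1..DIM('a). a i * indicator {v i} x + b i * indicator {- v i} x)"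
    using assms unfolding cross_weights_def by blast
  define n where "n = DIM('a)"
  have inj: "inj_on v {1..n}" using obs_inj[OF v] by (simp add: n_def)
  have injm: "inj_on (\<lambda>i. - v i) {1..n}" using inj by (rule inj_neg)
  have oB: "orthoset (v ` {1..n})" using obs_orthoset[OF v] by (simp add: n_def)
  have split: "pmf \<mu> x = (\<Sum>i=1..n. a i * indicator {v i} x) + (\<Sum>i=1..n. b i * indicator {- v i} x)" for x
    using p by (simp add: sum.distrib n_def)
  have s: "set_pmf \<mu> \<subseteq> v ` {1..n} \<union> uminus ` v ` {1..n}"
  proof
    fix x assume x: "x \<in> set_pmf \<mu>"
    show "x \<in> v ` {1..n} \<union> uminus ` v ` {1..n}"
    proof (rule ccontr)
      assume "x \<notin> v ` {1..n} \<union> uminus ` v ` {1..n}"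
      then have "x \<notin> v ` {1..n}" "x \<notin> (\<lambda>i. - v i) ` {1..n}" by auto
      then have "pmf \<mu> x = 0" unfolding split using sum_ind_miss[of x v "{1..n}" a] sum_ind_miss[of x "\<lambda>i. - v i" "{1..n}" b]
        by simp
      then show False using x by (simp add: set_pmf_eq)
    qed
  qed
  have pm: "pmf \<mu> (v i) + pmf \<mu> (- v i) = 1 / real n" if i: "i \<in> {1..n}" for i
  proof -
    have m1: "v i \<notin> (\<lambda>i. - v i) ` {1..n}"
    proof
      assume "v i \<in> (\<lambda>i. - v i) ` {1..n}"
      then obtain j where j: "j \<in> {1..n}" "v i = - v j" by auto
      have "v i \<in> v ` {1..n}" "v j \<in> v ` {1..n}" using i j(1) by auto
      then have "v i \<noteq> - v j" by (rule orthoset_neg[OF oB])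
      then show False using j(2) by simp
    qed
    have m2: "- v i \<notin> v ` {1..n}"
    proof
      assume "- v i \<in> v ` {1..n}"
      then obtain j where j: "j \<in> {1..n}" "- v i = v j" by auto
      have "v j \<in> v ` {1..n}" "v i \<in> v ` {1..n}" using i j(1) by auto
      then have "v j \<noteq> - v i" by (rule orthoset_neg[OF oB])
      then show False using j(2) by simp
    qed
    have "pmf \<mu> (v i) = a i" unfolding split using sum_ind_hit[OF inj i] sum_ind_miss[OF m1] by simp
    moreover have "pmf \<mu> (- v i) = b i" unfolding split
      using sum_ind_hit[OF injm i, of b] sum_ind_miss[OF m2] by simp
    ultimately show ?thesis using ab i by (simp add: n_def)
  qed
  show ?thesis using that v s pm by (simp add: n_def)
qed

lemma cross_weights_energy:
  fixes \<mu> :: "'a::euclidean_space pmf"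
  assumes "cross_weights \<mu>" "0 < a"
  shows "\<mu> \<in> P_fin" "energy a \<mu> = 1/2 * (1 - 1 / real DIM('a))"
proof -
  obtain v where v: "orthonormal_basis_seq DIM('a) v"
    and s: "set_pmf \<mu> \<subseteq> v ` {1..DIM('a)} \<union> uminus ` v ` {1..DIM('a)}"
    and m: "\<And>i. i \<in> {1..DIM('a)} \<Longrightarrow> pmf \<mu> (v i) + pmf \<mu> (- v i) = 1 / real DIM('a)"
    using cross_weights_D[OF assms(1)] by blast
  have oB: "orthoset (v ` {1..DIM('a)})" by (rule obs_orthoset[OF v])
  show "\<mu> \<in> P_fin"
    unfolding P_fin_def
  proof (intro CollectI conjI)
    show "finite (set_pmf \<mu>)" using s by (rule finite_subset) simp
    show "set_pmf \<mu> \<subseteq> sphere 0 1" using s oB by (auto simp: orthoset_def)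
  qed
  have "(\<Sum>b\<in>v ` {1..DIM('a)}. (pmf \<mu> b + pmf \<mu> (-b))^2) = (\<Sum>i=1..DIM('a). (pmf \<mu> (v i) + pmf \<mu> (- v i))^2)"
    by (rule sum.reindex[OF obs_inj[OF v], unfolded comp_def])
  also have "\<dots> = (\<Sum>i=1..DIM('a). (1 / real DIM('a))^2)" using m by (intro sum.cong) auto
  also have "\<dots> = 1 / real DIM('a)" by (simp add: power2_eq_square)
  finally show "energy a \<mu> = 1/2 * (1 - 1 / real DIM('a))"
    using energy_orthoset[OF oB s assms(2)] by simp
qed

lemma exists_basis_seq:
  "\<exists>v. orthonormal_basis_seq DIM('a::euclidean_space) v \<and> v ` {1..DIM('a)} = (Basis :: 'a set)"
proof -
  have fb: "finite (Basis::'a set)" by simp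
  obtain h :: "nat \<Rightarrow> 'a" where h: "bij_betw h {1..card (Basis::'a set)} Basis"
    using ex_bij_betw_nat_finite_1[OF fb] by blast
  then have inj: "inj_on h {1..DIM('a)}" and im: "h ` {1..DIM('a)} = Basis"
    by (auto simp: bij_betw_def)
  have "orthonormal_basis_seq DIM('a) h"
    unfolding orthonormal_basis_seq_def
  proof (intro conjI ballI)
    fix i j assume ij: "i \<in> {1..DIM('a)}" "j \<in> {1..DIM('a)}"
    then have "h i \<in> Basis" "h j \<in> Basis" using im by auto
    moreover have "h i = h j \<longleftrightarrow> i = j" using inj ij by (auto dest: inj_onD)
    ultimately show "h i \<bullet> h j = (if i = j then 1 else 0)" by (simp add: inner_Basis)
  next
    show "span (h ` {1..DIM('a)}) = UNIV" using im by (simp add: span_Basis)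
  qed
  then show ?thesis using im by blast
qed

lemma exists_cross_weights: "\<exists>\<mu>::'a::euclidean_space pmf. cross_weights \<mu>"
proof -
  obtain v where v: "orthonormal_basis_seq DIM('a) v" and im: "v ` {1..DIM('a)} = (Basis :: 'a set)"
    using exists_basis_seq by blast
  define \<mu> where "\<mu> = pmf_of_set (Basis :: 'a set)"
  have inj: "inj_on v {1..DIM('a)}" by (rule obs_inj[OF v])
  have ab: "\<forall>i\<in>{1..DIM('a)}. (\<lambda>_. 1 / real DIM('a)) i \<ge> 0 \<and> (\<lambda>_. 0::real) i \<ge> 0 \<and>
      (\<lambda>_. 1 / real DIM('a)) i + (\<lambda>_. 0::real) i = 1 / real DIM('a)" by simp
  have pf: "\<forall>x. pmf \<mu> x = (\<Sum>i = 1..DIM('a). (\<lambda>_. 1 / real DIM('a)) i * indicator {v i} x + (\<lambda>_. 0::real) i * indicator {- v i} x)"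
  proof
    fix x :: 'a
    have p: "pmf \<mu> x = indicator Basis x / real DIM('a)" by (simp add: \<mu>_def)
    show "pmf \<mu> x = (\<Sum>i = 1..DIM('a). (\<lambda>_. 1 / real DIM('a)) i * indicator {v i} x + (\<lambda>_. 0::real) i * indicator {- v i} x)"
    proof (cases "x \<in> Basis")
      case True
      then have "x \<in> v ` {1..DIM('a)}" using im by simp
      then obtain i where i: "i \<in> {1..DIM('a)}" "x = v i" by blast
      show ?thesis using sum_ind_hit[OF inj i(1), of "\<lambda>_. 1 / real DIM('a)"] i True p by simp
    next
      case False
      then have "x \<notin> v ` {1..DIM('a)}" using im by simp
      then show ?thesis using sum_ind_miss[of x v "{1..DIM('a)}" "\<lambda>_. 1 / real DIM('a)"] False p by simp
    qed
  qed
  have "cross_weights \<mu>"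
    unfolding cross_weights_def
    apply (rule exI[of _ v], rule exI[of _ "\<lambda>_. 1 / real DIM('a)"], rule exI[of _ "\<lambda>_. 0::real"])
    using v ab pf by (intro conjI)
  then show ?thesis by blast
qed

lemma sum_m_one:
  fixes \<mu> :: "'a::euclidean_space pmf"
  assumes B: "orthoset B" and supp: "set_pmf \<mu> \<subseteq> B \<union> uminus ` B"
  shows "(\<Sum>b\<in>B. pmf \<mu> b + pmf \<mu> (- b)) = 1"
proof -
  have finB: "finite B" using B by (simp add: orthoset_def)
  have "(\<Sum>b\<in>B. pmf \<mu> b + pmf \<mu> (- b)) = (\<Sum>x\<in>B \<union> uminus ` B. pmf \<mu> x)"
    using sum_pm[OF B, of "pmf \<mu>"] by simp
  also have "\<dots> = 1" using sum_pmf_eq_1[of "B \<union> uminus ` B" \<mu>] finB supp by simp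
  finally show ?thesis .
qed

lemma orthoset_enum:
  fixes B :: "'a::euclidean_space set"
  assumes B: "orthoset B" "card B = DIM('a)" "span B = UNIV"
  obtains v where "orthonormal_basis_seq DIM('a) v" "v ` {1..DIM('a)} = B"
proof -
  have finB: "finite B" using B by (simp add: orthoset_def)
  obtain v :: "nat \<Rightarrow> 'a" where h: "bij_betw v {1..card B} B"
    using ex_bij_betw_nat_finite_1[OF finB] by blast
  then have inj: "inj_on v {1..DIM('a)}" and im: "v ` {1..DIM('a)} = B"
    using B(2) by (auto simp: bij_betw_def)
  have "orthonormal_basis_seq DIM('a) v"
    unfolding orthonormal_basis_seq_def
  proof (intro conjI ballI)
    fix i j assume ij: "i \<in> {1..DIM('a)}" "j \<in> {1..DIM('a)}"
    then have "v i \<in> B" "v j \<in> B" using im by auto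
    moreover have "v i = v j \<longleftrightarrow> i = j" using inj ij by (auto dest: inj_onD)
    ultimately show "v i \<bullet> v j = (if i = j then 1 else 0)" using orthoset_inner[OF B(1)] by simp
  next
    show "span (v ` {1..DIM('a)}) = UNIV" using im B(3) by simp
  qed
  then show ?thesis using that im by blast
qed

lemma maximizer_cw:
  fixes \<mu> :: "'a::euclidean_space pmf"
  assumes P: "\<mu> \<in> P_fin" and g: "goodset (set_pmf \<mu>)"
    and e: "energy 1 \<mu> = 1/2 * (1 - 1 / real DIM('a))"
  shows "cross_weights \<mu>"
proof -
  have fin: "finite (set_pmf \<mu>)" and sph: "set_pmf \<mu> \<subseteq> sphere 0 1" using P by (auto simp: P_fin_def)
  obtain B where B: "orthoset B" "card B = DIM('a)" "span B = UNIV" and supp: "set_pmf \<mu> \<subseteq> B \<union> uminus ` B"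
    using good_to_basis[OF fin sph g] by blast
  have finB: "finite B" using B by (simp add: orthoset_def)
  define m where "m b = pmf \<mu> b + pmf \<mu> (- b)" for b
  define D where "D = real DIM('a)"
  have D: "D > 0" by (simp add: D_def)
  have sq: "(\<Sum>b\<in>B. (m b)^2) = 1 / D"
    using energy_orthoset[OF B(1) supp, of 1] e by (simp add: m_def D_def)
  have s1: "(\<Sum>b\<in>B. m b) = 1" using sum_m_one[OF B(1) supp] by (simp add: m_def)
  have cB: "real (card B) = D" using B(2) by (simp add: D_def)
  have "(\<Sum>b\<in>B. (m b - 1 / D)^2) = (\<Sum>b\<in>B. (m b)^2) - 2 / D * (\<Sum>b\<in>B. m b) + real (card B) * (1 / D)^2"
    by (simp add: power2_diff sum_subtractf sum.distrib sum_distrib_left sum_distrib_right sum_divide_distrib algebra_simps)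
  also have "\<dots> = 0" using D unfolding sq s1 cB by (simp add: power2_eq_square field_simps)
  finally have z: "(\<Sum>b\<in>B. (m b - 1 / D)^2) = 0" .
  have mb: "m b = 1 / D" if "b \<in> B" for b
  proof -
    have "\<forall>b\<in>B. (m b - 1 / D)^2 = 0" using z finB by (subst (asm) sum_nonneg_eq_0_iff) auto
    then show ?thesis using that by simp
  qed
  obtain v where v: "orthonormal_basis_seq DIM('a) v" and im: "v ` {1..DIM('a)} = B"
    using orthoset_enum[OF B] by blast
  have supp': "set_pmf \<mu> \<subseteq> v ` {1..DIM('a)} \<union> uminus ` v ` {1..DIM('a)}" using supp im by simp
  have ab: "\<forall>i\<in>{1..DIM('a)}. pmf \<mu> (v i) \<ge> 0 \<and> pmf \<mu> (- v i) \<ge> 0 \<and>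
      pmf \<mu> (v i) + pmf \<mu> (- v i) = 1 / real DIM('a)"
  proof
    fix i assume i: "i \<in> {1..DIM('a)}"
    then have "v i \<in> B" using im by auto
    then show "pmf \<mu> (v i) \<ge> 0 \<and> pmf \<mu> (- v i) \<ge> 0 \<and> pmf \<mu> (v i) + pmf \<mu> (- v i) = 1 / real DIM('a)"
      using mb[of "v i"] by (simp add: m_def D_def)
  qed
  have pf: "\<forall>x. pmf \<mu> x = (\<Sum>i=1..DIM('a). pmf \<mu> (v i) * indicator {v i} x + pmf \<mu> (- v i) * indicator {- v i} x)"
    using pmf_formula_gen[OF v supp'] by blast
  show ?thesis
    unfolding cross_weights_def
    apply (rule exI[of _ v], rule exI[of _ "\<lambda>i. pmf \<mu> (v i)"], rule exI[of _ "\<lambda>i. pmf \<mu> (- v i)"])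
    using v ab pf by (intro conjI)
qed

lemma partB_dir1:
  fixes \<mu> :: "'a::euclidean_space pmf"
  assumes C1: "\<forall>\<mu>::'a pmf. cross_weights \<mu> \<longrightarrow> maximizes 1 P_fin \<mu>" and a: "1 < a"
  shows "maximizes a P_fin \<mu> \<longleftrightarrow> cross_weights \<mu>"
proof
  assume cw: "cross_weights \<mu>"
  have a0: "0 < a" using a by simp
  have P: "\<mu> \<in> P_fin" and ea: "energy a \<mu> = 1/2 * (1 - 1 / real DIM('a))"
    using cross_weights_energy[OF cw a0] by auto
  have e1: "energy 1 \<mu> = 1/2 * (1 - 1 / real DIM('a))" using cross_weights_energy[OF cw] by simp
  have m1: "maximizes 1 P_fin \<mu>" using C1 cw by blast
  show "maximizes a P_fin \<mu>"
    unfolding maximizes_def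
  proof (intro conjI ballI)
    show "\<mu> \<in> P_fin" by (rule P)
    fix \<nu> :: "'a pmf" assume \<nu>: "\<nu> \<in> P_fin"
    have "energy a \<nu> \<le> energy 1 \<nu>" using energy_le_1[OF \<nu>] a by simp
    also have "\<dots> \<le> energy 1 \<mu>" using m1 \<nu> by (auto simp: maximizes_def)
    finally show "energy a \<nu> \<le> energy a \<mu>" using ea e1 by simp
  qed
next
  assume m: "maximizes a P_fin \<mu>"
  then have P: "\<mu> \<in> P_fin" and le: "\<And>\<nu>::'a pmf. \<nu> \<in> P_fin \<Longrightarrow> energy a \<nu> \<le> energy a \<mu>"
    by (auto simp: maximizes_def)
  obtain \<mu>0 :: "'a pmf" where cw0: "cross_weights \<mu>0" using exists_cross_weights by blast
  have a0: "0 < a" using a by simp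
  have P0: "\<mu>0 \<in> P_fin" and ea0: "energy a \<mu>0 = 1/2 * (1 - 1 / real DIM('a))"
    using cross_weights_energy[OF cw0 a0] by auto
  have e10: "energy 1 \<mu>0 = 1/2 * (1 - 1 / real DIM('a))" using cross_weights_energy[OF cw0] by simp
  have m10: "maximizes 1 P_fin \<mu>0" using C1 cw0 by blast
  have "energy a \<mu>0 \<le> energy a \<mu>" using le P0 by blast
  moreover have "energy a \<mu> \<le> energy 1 \<mu>" using energy_le_1[OF P] a by simp
  moreover have "energy 1 \<mu> \<le> energy 1 \<mu>0" using m10 P by (auto simp: maximizes_def)
  ultimately have eq1: "energy a \<mu> = energy 1 \<mu>" and eq2: "energy 1 \<mu> = 1/2 * (1 - 1 / real DIM('a))"
    using ea0 e10 by linarith+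
  have g: "goodset (set_pmf \<mu>)" using energy_eq_good[OF P a eq1] .
  show "cross_weights \<mu>" by (rule maximizer_cw[OF P g eq2])
qed

lemma partB_dir2:
  fixes \<mu> :: "'a::euclidean_space pmf"
  assumes C2: "\<forall>a::real>1. \<forall>\<mu>::'a pmf. maximizes a P_fin \<mu> \<longleftrightarrow> cross_weights \<mu>"
    and cw: "cross_weights \<mu>"
  shows "maximizes 1 P_fin \<mu>"
  unfolding maximizes_def
proof (intro conjI ballI)
  show P: "\<mu> \<in> P_fin" using cross_weights_energy(1)[OF cw, of 1] by simp
  fix \<nu> :: "'a pmf" assume \<nu>: "\<nu> \<in> P_fin"
  have "energy 1 \<nu> \<le> 1/2 * (1 - 1 / real DIM('a))"
  proof (rule energy_limit_bound[OF \<nu>])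
    fix a :: real assume a: "1 < a"
    then have "maximizes a P_fin \<mu>" using C2 cw by blast
    then have "energy a \<nu> \<le> energy a \<mu>" using \<nu> by (auto simp: maximizes_def)
    also have "energy a \<mu> = 1/2 * (1 - 1 / real DIM('a))" using cross_weights_energy[OF cw] a by simp
    finally show "energy a \<nu> \<le> 1/2 * (1 - 1 / real DIM('a))" .
  qed
  also have "\<dots> = energy 1 \<mu>" using cross_weights_energy[OF cw] by simp
  finally show "energy 1 \<nu> \<le> energy 1 \<mu>" .
qed

lemma partB:
  "((\<forall>\<mu>::'a::euclidean_space pmf. cross_weights \<mu> \<longrightarrow> maximizes 1 P_fin \<mu>)
    \<longleftrightarrow> (\<forall>\<alpha>::real>1. \<forall>\<mu>::'a pmf. maximizes \<alpha> P_fin \<mu> \<longleftrightarrow> cross_weights \<mu>))"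
proof
  assume C1: "\<forall>\<mu>::'a pmf. cross_weights \<mu> \<longrightarrow> maximizes 1 P_fin \<mu>"
  show "\<forall>\<alpha>::real>1. \<forall>\<mu>::'a pmf. maximizes \<alpha> P_fin \<mu> \<longleftrightarrow> cross_weights \<mu>"
    using partB_dir1[OF C1] by blast
next
  assume C2: "\<forall>\<alpha>::real>1. \<forall>\<mu>::'a pmf. maximizes \<alpha> P_fin \<mu> \<longleftrightarrow> cross_weights \<mu>"
  show "\<forall>\<mu>::'a pmf. cross_weights \<mu> \<longrightarrow> maximizes 1 P_fin \<mu>"
    using partB_dir2[OF C2] by blast
qed

definition rr :: "nat \<Rightarrow> nat \<Rightarrow> nat" where "rr n i = (i - 1) mod n + 1"
definition pp :: "nat \<Rightarrow> nat \<Rightarrow> nat" where "pp n i = (i - 1) div n"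
definition cnt :: "nat \<Rightarrow> nat \<Rightarrow> nat \<Rightarrow> nat" where
  "cnt n N j = card {i\<in>{1..N}. i mod n = j mod n}"

lemma rr_range: "1 \<le> n \<Longrightarrow> rr n i \<in> {1..n}"
  unfolding rr_def by (simp add: Suc_leI)

lemma mod_suc_iff:
  fixes a b n :: nat
  assumes "1 \<le> n"
  shows "(a + 1) mod n = (b + 1) mod n \<longleftrightarrow> a mod n = b mod n"
proof
  assume h: "(a + 1) mod n = (b + 1) mod n"
  have "((a + 1) mod n + (n - 1)) mod n = ((b + 1) mod n + (n - 1)) mod n" using h by simp
  then have "(a + 1 + (n - 1)) mod n = (b + 1 + (n - 1)) mod n" by (simp only: mod_add_left_eq)
  moreover have "a + 1 + (n - 1) = a + n" "b + 1 + (n - 1) = b + n" using assms by auto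
  ultimately show "a mod n = b mod n" by simp
next
  assume h: "a mod n = b mod n"
  have "(a mod n + 1) mod n = (b mod n + 1) mod n" using h by simp
  then show "(a + 1) mod n = (b + 1) mod n" by (simp only: mod_add_left_eq)
qed

lemma rr_iff:
  assumes "1 \<le> n" "1 \<le> i" "j \<in> {1..n}"
  shows "i mod n = j mod n \<longleftrightarrow> rr n i = j"
proof -
  have ii: "i = (i - 1) + 1" using assms(2) by simp
  have jj: "j = (j - 1) + 1" using assms(3) by simp
  have jl: "j - 1 < n" using assms(3) by auto
  have "i mod n = j mod n \<longleftrightarrow> ((i - 1) + 1) mod n = ((j - 1) + 1) mod n" using ii jj by simp
  also have "\<dots> \<longleftrightarrow> (i - 1) mod n = (j - 1) mod n" by (rule mod_suc_iff[OF assms(1)])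
  also have "\<dots> \<longleftrightarrow> (i - 1) mod n = j - 1" using jl by simp
  also have "\<dots> \<longleftrightarrow> rr n i = j" unfolding rr_def using assms(3) by auto
  finally show ?thesis .
qed

lemma rr_pp_decomp: assumes "1 \<le> i" shows "i = rr n i + pp n i * n"
proof -
  have "(i - 1) mod n + (i - 1) div n * n = i - 1" by (rule mod_div_mult_eq)
  then show ?thesis unfolding rr_def pp_def using assms by linarith
qed

lemma rr_pp_lin:
  assumes "1 \<le> n" "j \<in> {1..n}"
  shows "rr n (j + k * n) = j" "pp n (j + k * n) = k"
proof -
  have e: "j + k * n - 1 = (j - 1) + k * n" using assms by auto
  have jl: "j - 1 < n" using assms by auto
  have m: "(j - 1 + k * n) mod n = j - 1" using jl by simp
  have d: "(j - 1 + k * n) div n = k" using jl by simp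
  show "rr n (j + k * n) = j" unfolding rr_def e m using assms by simp
  show "pp n (j + k * n) = k" unfolding pp_def e d ..
qed

lemma set_lin:
  assumes "1 \<le> n" "j \<in> {1..n}"
  shows "{i\<in>{1..N}. i mod n = j mod n \<and> P (pp n i)} = (\<lambda>k. j + k * n) ` {k. j + k * n \<le> N \<and> P k}"
proof (intro equalityI subsetI)
  fix i assume "i \<in> {i\<in>{1..N}. i mod n = j mod n \<and> P (pp n i)}"
  then have i: "1 \<le> i" "i \<le> N" "i mod n = j mod n" "P (pp n i)" by auto
  then have "rr n i = j" using rr_iff[OF assms(1) i(1) assms(2)] by simp
  then have "i = j + pp n i * n" using rr_pp_decomp[OF i(1), of n] by simp
  then show "i \<in> (\<lambda>k. j + k * n) ` {k. j + k * n \<le> N \<and> P k}"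
    using i by (intro image_eqI[of _ _ "pp n i"]) auto
next
  fix i assume "i \<in> (\<lambda>k. j + k * n) ` {k. j + k * n \<le> N \<and> P k}"
  then obtain k where k: "i = j + k * n" "j + k * n \<le> N" "P k" by auto
  have "1 \<le> i" using k(1) assms(2) by auto
  moreover have "i mod n = j mod n" using rr_iff[OF assms(1) \<open>1 \<le> i\<close> assms(2)] rr_pp_lin[OF assms] k(1) by simp
  ultimately show "i \<in> {i\<in>{1..N}. i mod n = j mod n \<and> P (pp n i)}"
    using k rr_pp_lin[OF assms] by auto
qed

lemma inj_lin: "1 \<le> n \<Longrightarrow> inj (\<lambda>k::nat. j + k * n)"
  by (auto simp: inj_def)

definition KK :: "nat \<Rightarrow> nat \<Rightarrow> nat \<Rightarrow> nat" where
  "KK n N j = (if j \<le> N then (N - j) div n + 1 else 0)"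

lemma lin_le_iff:
  assumes "1 \<le> n"
  shows "j + k * n \<le> N \<longleftrightarrow> k < KK n N j"
proof (cases "j \<le> N")
  case True
  have "j + k * n \<le> N \<longleftrightarrow> k * n \<le> N - j" using True by auto
  also have "\<dots> \<longleftrightarrow> k \<le> (N - j) div n" using assms by (simp add: less_eq_div_iff_mult_less_eq)
  finally show ?thesis using True by (simp add: KK_def less_Suc_eq_le)
next
  case False then show ?thesis by (simp add: KK_def)
qed

lemma cnt_KK:
  assumes "1 \<le> n" "j \<in> {1..n}"
  shows "cnt n N j = KK n N j"
proof -
  have "{i\<in>{1..N}. i mod n = j mod n} = {i\<in>{1..N}. i mod n = j mod n \<and> True}" by simp
  also have "\<dots> = (\<lambda>k. j + k * n) ` {k. j + k * n \<le> N \<and> True}"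
    by (rule set_lin[OF assms])
  also have "{k. j + k * n \<le> N \<and> True} = {..<KK n N j}" using lin_le_iff[OF assms(1)] by auto
  finally show ?thesis unfolding cnt_def
    using card_image[OF inj_on_subset[OF inj_lin[OF assms(1)]]] by simp
qed

lemma card_sel_lt:
  assumes "1 \<le> n" "j \<in> {1..n}" "a \<le> cnt n N j"
  shows "card {i\<in>{1..N}. i mod n = j mod n \<and> pp n i < a} = a"
    and "card {i\<in>{1..N}. i mod n = j mod n \<and> \<not> pp n i < a} = cnt n N j - a"
proof -
  have K: "cnt n N j = KK n N j" by (rule cnt_KK[OF assms(1,2)])
  have inj: "inj_on (\<lambda>k. j + k * n) X" for X by (rule inj_on_subset[OF inj_lin[OF assms(1)]]) simp
  have "{k. j + k * n \<le> N \<and> k < a} = {..<a}" using lin_le_iff[OF assms(1)] assms(3) K by auto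
  moreover have "{i\<in>{1..N}. i mod n = j mod n \<and> pp n i < a} = (\<lambda>k. j + k * n) ` {k. j + k * n \<le> N \<and> k < a}"
    using set_lin[OF assms(1,2), of N "\<lambda>k. k < a"] by simp
  ultimately show "card {i\<in>{1..N}. i mod n = j mod n \<and> pp n i < a} = a"
    using card_image[OF inj] by simp
  have "{k. j + k * n \<le> N \<and> \<not> k < a} = {a..<KK n N j}" using lin_le_iff[OF assms(1)] by auto
  moreover have "{i\<in>{1..N}. i mod n = j mod n \<and> \<not> pp n i < a} = (\<lambda>k. j + k * n) ` {k. j + k * n \<le> N \<and> \<not> k < a}"
    using set_lin[OF assms(1,2), of N "\<lambda>k. \<not> k < a"] by simp
  ultimately show "card {i\<in>{1..N}. i mod n = j mod n \<and> \<not> pp n i < a} = cnt n N j - a"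
    using card_image[OF inj] K by simp
qed

lemma KK_closed:
  assumes "1 \<le> n" "j \<in> {1..n}"
  shows "KK n N j = (if j \<le> N mod n then N div n + 1 else N div n)"
proof -
  define q where "q = N div n"
  define r where "r = N mod n"
  have N: "N = q * n + r" by (simp add: q_def r_def)
  have rl: "r < n" using assms(1) by (simp add: r_def)
  have jn: "j \<le> n" "1 \<le> j" using assms(2) by auto
  show ?thesis
  proof (cases "j \<le> r")
    case True
    have "N - j = q * n + (r - j)" using add_diff_assoc[OF True, of "q * n"] N by simp
    moreover have "r - j < n" using rl by linarith
    ultimately have "(N - j) div n = q" using assms(1) by simp
    moreover have "j \<le> N" using True N by linarith
    ultimately show ?thesis using True by (simp add: KK_def q_def r_def)
  next
    case False
    show ?thesis
    proof (cases q)
      case 0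
      then have "N = r" using N by simp
      then have "\<not> j \<le> N" using False by simp
      then show ?thesis using False 0 by (simp add: KK_def q_def r_def)
    next
      case (Suc q')
      have N': "N = q' * n + (n + r)" using N Suc by simp
      have jle: "j \<le> n + r" using jn by linarith
      have "N - j = q' * n + (n + r - j)" using add_diff_assoc[OF jle, of "q' * n"] N' by simp
      moreover have "n + r - j < n" using False jn by linarith
      ultimately have "(N - j) div n = q'" using assms(1) by simp
      moreover have "j \<le> N" using N' jle by linarith
      ultimately show ?thesis using False Suc by (simp add: KK_def q_def r_def)
    qed
  qed
qed

lemma sum_cnt_sq:
  assumes "1 \<le> n"
  shows "(\<Sum>j=1..n. (cnt n N j)^2) = n * (N div n)^2 + 2 * (N div n) * (N mod n) + N mod n"
proof -
  define q where "q = N div n"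
  define r where "r = N mod n"
  have rl: "r \<le> n" using assms by (simp add: r_def less_imp_le)
  have c: "cnt n N j = (if j \<le> r then q + 1 else q)" if "j \<in> {1..n}" for j
    using cnt_KK[OF assms that] KK_closed[OF assms that] by (simp add: q_def r_def)
  have "(\<Sum>j=1..n. (cnt n N j)^2) = (\<Sum>j=1..n. (if j \<le> r then (q+1)^2 else q^2))"
    using c by (intro sum.cong) auto
  also have "\<dots> = (\<Sum>j=1..r. (q+1)^2) + (\<Sum>j=r+1..n. q^2)"
  proof -
    have u: "{1..n} = {1..r} \<union> {r+1..n}" using rl by auto
    have "(\<Sum>j=1..n. (if j \<le> r then (q+1)^2 else q^2)) = (\<Sum>j\<in>{1..r}. (if j \<le> r then (q+1)^2 else q^2)) + (\<Sum>j\<in>{r+1..n}. (if j \<le> r then (q+1)^2 else q^2))"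
      unfolding u by (rule sum.union_disjoint) auto
    also have "\<dots> = (\<Sum>j=1..r. (q+1)^2) + (\<Sum>j=r+1..n. q^2)" by simp
    finally show ?thesis .
  qed
  also have "\<dots> = r * (q+1)^2 + (n - r) * q^2" by simp
  also have "\<dots> = n * q^2 + 2 * q * r + r" using rl
    by (simp add: power2_eq_square algebra_simps diff_mult_distrib)
  finally show ?thesis by (simp add: q_def r_def)
qed

lemma balanced:
  fixes c :: "'b \<Rightarrow> nat"
  assumes fin: "finite B" and cB: "card B = n" and n: "1 \<le> n"
    and s: "(\<Sum>b\<in>B. c b) = N"
    and sq: "(\<Sum>b\<in>B. (c b)^2) = n * (N div n)^2 + 2 * (N div n) * (N mod n) + N mod n"
  shows "\<forall>b\<in>B. c b = N div n \<or> c b = N div n + 1"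
proof -
  define q where "q = N div n"
  define r where "r = N mod n"
  define d where "d b = int (c b) - int q" for b
  have N: "N = n * q + r" by (simp add: q_def r_def)
  have sd: "(\<Sum>b\<in>B. d b) = int r"
  proof -
    have "(\<Sum>b\<in>B. d b) = int (\<Sum>b\<in>B. c b) - int (card B) * int q"
      by (simp add: d_def sum_subtractf)
    also have "\<dots> = int r" using s cB N by simp
    finally show ?thesis .
  qed
  have "int (\<Sum>b\<in>B. (c b)^2) = (\<Sum>b\<in>B. (int q + d b)^2)" by (simp add: d_def)
  also have "\<dots> = (\<Sum>b\<in>B. int q^2 + (d b)^2 + 2 * int q * d b)" by (simp only: power2_sum)
  also have "\<dots> = int (card B) * int q^2 + (\<Sum>b\<in>B. (d b)^2) + 2 * int q * (\<Sum>b\<in>B. d b)"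
    by (simp add: sum.distrib sum_distrib_left)
  finally have "(\<Sum>b\<in>B. (d b)^2) = int r"
    using sq sd cB by (simp add: q_def r_def)
  then have z: "(\<Sum>b\<in>B. (d b)^2 - d b) = 0" using sd by (simp add: sum_subtractf)
  have nn: "\<forall>b\<in>B. 0 \<le> (d b)^2 - d b"
  proof
    fix b
    have "d b \<le> (d b)^2"
    proof (cases "d b \<le> 0")
      case True then show ?thesis by (smt (verit) zero_le_power2)
    next
      case False then have "1 \<le> d b" by simp
      then have "d b * 1 \<le> d b * d b" by (intro mult_left_mono) auto
      then show ?thesis by (simp add: power2_eq_square)
    qed
    then show "0 \<le> (d b)^2 - d b" by simp
  qed
  have "\<forall>b\<in>B. (d b)^2 - d b = 0" using z nn fin by (subst (asm) sum_nonneg_eq_0_iff) auto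
  then have "\<forall>b\<in>B. d b = 0 \<or> d b = 1"
  proof (intro ballI)
    fix b assume "b \<in> B"
    then have "(d b)^2 - d b = 0" using \<open>\<forall>b\<in>B. (d b)^2 - d b = 0\<close> by blast
    then have "d b * (d b - 1) = 0" by (simp add: power2_eq_square algebra_simps)
    then show "d b = 0 \<or> d b = 1" by simp
  qed
  then show ?thesis by (auto simp: d_def q_def)
qed

lemma card_big:
  fixes c :: "'b \<Rightarrow> nat"
  assumes fin: "finite B" and cB: "card B = n" and n: "1 \<le> n"
    and s: "(\<Sum>b\<in>B. c b) = N"
    and bal: "\<forall>b\<in>B. c b = N div n \<or> c b = N div n + 1"
  shows "card {b\<in>B. c b = N div n + 1} = N mod n"
proof -
  define q where "q = N div n"
  have "(\<Sum>b\<in>B. c b) = (\<Sum>b\<in>B. q + (if c b = q + 1 then 1 else 0))"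
    using bal by (intro sum.cong) (auto simp: q_def)
  also have "\<dots> = n * q + card {b\<in>B. c b = q + 1}"
  proof -
    have e: "B \<inter> {b. c b = Suc q} = {b\<in>B. c b = Suc q}" by blast
    show ?thesis using fin cB by (simp add: sum.distrib sum.If_cases e)
  qed
  finally have "N = n * q + card {b\<in>B. c b = q + 1}" using s by simp
  moreover have "N = n * q + N mod n" using div_mult_mod_eq[of N n] by (simp add: q_def mult.commute)
  ultimately show ?thesis unfolding q_def by linarith
qed

lemma pmf_emp:
  fixes N :: nat
  assumes "1 \<le> N"
  shows "pmf (map_pmf x (pmf_of_set {1..N})) y = real (card {i\<in>{1..N}. x i = y}) / real N"
proof -
  have ne: "{1..N} \<noteq> {}" using assms by auto
  have e: "{1..N} \<inter> x -` {y} = {i\<in>{1..N}. x i = y}" by blast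
  show ?thesis unfolding pmf_map measure_pmf_of_set[OF ne finite_atLeastAtMost] e by simp
qed

lemma set_emp:
  fixes N :: nat
  assumes "1 \<le> N"
  shows "set_pmf (map_pmf x (pmf_of_set {1..N})) = x ` {1..N}"
proof -
  have ne: "{1..N} \<noteq> {}" using assms by auto
  show ?thesis by (simp only: set_map_pmf set_pmf_of_set[OF ne finite_atLeastAtMost])
qed

lemma Peq_Pfin:
  fixes \<mu> :: "'a::euclidean_space pmf" and N :: nat
  assumes "1 \<le> N" "\<mu> \<in> P_eq N"
  shows "\<mu> \<in> P_fin"
proof -
  obtain x where x: "\<mu> = map_pmf x (pmf_of_set {1..N})" "\<forall>i\<in>{1..N}. x i \<in> sphere 0 1"
    using assms(2) unfolding P_eq_def by blast
  show ?thesis unfolding P_fin_def using x set_emp[OF assms(1), of x] by auto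
qed

definition EA :: "nat \<Rightarrow> nat \<Rightarrow> real" where
  "EA n N = 1/2 * (1 - real (n * (N div n)^2 + 2 * (N div n) * (N mod n) + N mod n) / (real N)^2)"

lemma pm_inner_zero:
  fixes u w z :: "'a::euclidean_space"
  assumes "z = u \<or> z = - u" "z = w \<or> z = - w" "u \<bullet> w = 0"
  shows "z \<bullet> z = 0"
  using assms by (auto simp: inner_commute)

lemma cross_config_energy:
  fixes \<mu> :: "'a::euclidean_space pmf" and N :: nat
  assumes N: "1 \<le> N" and cc: "cross_config N \<mu>" and a: "0 < a"
  shows "\<mu> \<in> P_eq N" "energy a \<mu> = EA DIM('a) N"
proof -
  define n where "n = DIM('a)"
  have n1: "1 \<le> n" by (simp add: n_def DIM_positive Suc_leI)
  obtain v x where v: "orthonormal_basis_seq n v" and xs: "\<forall>i\<in>{1..N}. x i \<in> sphere 0 1"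
    and mu: "\<mu> = map_pmf x (pmf_of_set {1..N})"
    and pat: "\<forall>i\<in>{1..N}. \<forall>j\<in>{1..n}. i mod n = j mod n \<longrightarrow> x i \<in> {v j, - v j}"
    using cc unfolding cross_config_def n_def by blast
  show "\<mu> \<in> P_eq N" unfolding P_eq_def using mu xs by blast
  define B where "B = v ` {1..n}"
  have oB: "orthoset B" unfolding B_def by (rule obs_orthoset[OF v])
  have inj: "inj_on v {1..n}" by (rule obs_inj[OF v])
  have cls: "(x i = v j \<or> x i = - v j) \<longleftrightarrow> i mod n = j mod n" if i: "i \<in> {1..N}" and j: "j \<in> {1..n}" for i j
  proof
    assume "i mod n = j mod n" then show "x i = v j \<or> x i = - v j" using pat i j by auto
  next
    assume h: "x i = v j \<or> x i = - v j"
    define j' where "j' = rr n i"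
    have j': "j' \<in> {1..n}" unfolding j'_def by (rule rr_range[OF n1])
    have ij': "i mod n = j' mod n" using rr_iff[OF n1 _ j'] i by (simp add: j'_def)
    then have h': "x i = v j' \<or> x i = - v j'" using pat i j' by auto
    have "j = j'"
    proof (rule ccontr)
      assume "j \<noteq> j'"
      then have "v j \<bullet> v j' = 0" using obs_inner[OF v j j'] by simp
      then have "x i \<bullet> x i = 0" by (rule pm_inner_zero[OF h h'])
      moreover have "norm (x i) = 1" using xs i by auto
      ultimately show False by (simp add: dot_square_norm)
    qed
    then show "i mod n = j mod n" using ij' by simp
  qed
  have supp: "set_pmf \<mu> \<subseteq> B \<union> uminus ` B"
  proof
    fix y assume "y \<in> set_pmf \<mu>"
    moreover have "set_pmf \<mu> = x ` {1..N}" using set_emp[OF N, of x] mu by simp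
    ultimately obtain i where i: "i \<in> {1..N}" "y = x i" by blast
    have j: "rr n i \<in> {1..n}" by (rule rr_range[OF n1])
    have "i mod n = rr n i mod n" using rr_iff[OF n1 _ j] i by simp
    then have "x i = v (rr n i) \<or> x i = - v (rr n i)" using cls[OF i(1) j] by simp
    then show "y \<in> B \<union> uminus ` B" using i j by (auto simp: B_def)
  qed
  have m: "pmf \<mu> (v j) + pmf \<mu> (- v j) = real (cnt n N j) / real N" if j: "j \<in> {1..n}" for j
  proof -
    have vB: "v j \<in> B" using j by (simp add: B_def)
    have ne: "v j \<noteq> - v j" by (rule orthoset_neg[OF oB vB vB])
    have dis: "{i\<in>{1..N}. x i = v j} \<inter> {i\<in>{1..N}. x i = - v j} = {}" using ne by auto
    have un: "{i\<in>{1..N}. x i = v j} \<union> {i\<in>{1..N}. x i = - v j} = {i\<in>{1..N}. i mod n = j mod n}"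
      using cls[OF _ j] by auto
    have "pmf \<mu> (v j) + pmf \<mu> (- v j) = (real (card {i\<in>{1..N}. x i = v j}) + real (card {i\<in>{1..N}. x i = - v j})) / real N"
      unfolding mu pmf_emp[OF N] by (simp add: add_divide_distrib)
    also have "real (card {i\<in>{1..N}. x i = v j}) + real (card {i\<in>{1..N}. x i = - v j})
        = real (card {i\<in>{1..N}. i mod n = j mod n})"
      using card_Un_disjoint[of "{i\<in>{1..N}. x i = v j}" "{i\<in>{1..N}. x i = - v j}"] dis un by simp
    finally show ?thesis by (simp add: cnt_def)
  qed
  have "(\<Sum>b\<in>B. (pmf \<mu> b + pmf \<mu> (-b))^2) = (\<Sum>j=1..n. (pmf \<mu> (v j) + pmf \<mu> (- v j))^2)"
    unfolding B_def by (rule sum.reindex[OF inj, unfolded comp_def])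
  also have "\<dots> = (\<Sum>j=1..n. (real (cnt n N j))^2 / (real N)^2)"
    using m by (intro sum.cong) (auto simp: power_divide)
  also have "\<dots> = real (\<Sum>j=1..n. (cnt n N j)^2) / (real N)^2"
    by (simp add: sum_divide_distrib)
  also have "\<dots> = real (n * (N div n)^2 + 2 * (N div n) * (N mod n) + N mod n) / (real N)^2"
    using sum_cnt_sq[OF n1, of N] by simp
  finally show "energy a \<mu> = EA DIM('a) N"
    using energy_orthoset[OF oB supp a] by (simp add: EA_def n_def)
qed

lemma exists_cross_config:
  fixes N :: nat
  assumes N: "1 \<le> N"
  shows "\<exists>\<mu>::'a::euclidean_space pmf. cross_config N \<mu>"
proof -
  define n where "n = DIM('a)"
  have n1: "1 \<le> n" by (simp add: n_def DIM_positive Suc_leI)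
  obtain v :: "nat \<Rightarrow> 'a" where v: "orthonormal_basis_seq n v" using exists_basis_seq unfolding n_def by blast
  define x where "x i = v (rr n i)" for i
  have oB: "orthoset (v ` {1..n})" by (rule obs_orthoset[OF v])
  have xs: "\<forall>i\<in>{1..N}. x i \<in> sphere 0 1"
  proof
    fix i assume "i \<in> {1..N}"
    have "v (rr n i) \<in> v ` {1..n}" using rr_range[OF n1] by simp
    then show "x i \<in> sphere 0 1" using oB by (auto simp: orthoset_def x_def)
  qed
  have pat: "\<forall>i\<in>{1..N}. \<forall>j\<in>{1..n}. i mod n = j mod n \<longrightarrow> x i \<in> {v j, - v j}"
  proof (intro ballI impI)
    fix i j assume i: "i \<in> {1..N}" and j: "j \<in> {1..n}" and "i mod n = j mod n"
    then have "rr n i = j" using rr_iff[OF n1 _ j] by simp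
    then show "x i \<in> {v j, - v j}" by (simp add: x_def)
  qed
  have "cross_config N (map_pmf x (pmf_of_set {1..N}))"
    unfolding cross_config_def n_def[symmetric]
    apply (rule exI[of _ v], rule exI[of _ x])
    using v xs pat by (intro conjI refl)
  then show ?thesis by blast
qed

lemma coll_eq: "(\<And>i. i \<in> S \<Longrightarrow> P i \<longleftrightarrow> Q i) \<Longrightarrow> {i\<in>S. P i} = {i\<in>S. Q i}"
  by auto

lemma counts_cc:
  fixes \<mu> :: "'a::euclidean_space pmf" and N :: nat and A C :: "nat \<Rightarrow> nat"
  assumes N: "1 \<le> N" and v: "orthonormal_basis_seq DIM('a) v"
    and AC: "\<forall>j\<in>{1..DIM('a)}. A j + C j = cnt DIM('a) N j"
    and supp: "set_pmf \<mu> \<subseteq> v ` {1..DIM('a)} \<union> uminus ` v ` {1..DIM('a)}"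
    and pa: "\<forall>j\<in>{1..DIM('a)}. pmf \<mu> (v j) = real (A j) / real N"
    and pc: "\<forall>j\<in>{1..DIM('a)}. pmf \<mu> (- v j) = real (C j) / real N"
  shows "cross_config N \<mu>"
proof -
  define n where "n = DIM('a)"
  have n1: "1 \<le> n" by (simp add: n_def DIM_positive Suc_leI)
  have v': "orthonormal_basis_seq n v" using v by (simp add: n_def)
  have inj: "inj_on v {1..n}" by (rule obs_inj[OF v'])
  have oB: "orthoset (v ` {1..n})" by (rule obs_orthoset[OF v'])
  define x where "x i = (if pp n i < A (rr n i) then v (rr n i) else - v (rr n i))" for i
  have xpm: "x i = v (rr n i) \<or> x i = - v (rr n i)" for i by (simp add: x_def)
  have xs: "\<forall>i\<in>{1..N}. x i \<in> sphere 0 1"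
  proof
    fix i assume "i \<in> {1..N}"
    have "v (rr n i) \<in> v ` {1..n}" using rr_range[OF n1] by simp
    then have "norm (v (rr n i)) = 1" using oB by (auto simp: orthoset_def)
    then show "x i \<in> sphere 0 1" by (auto simp: x_def)
  qed
  have pat: "\<forall>i\<in>{1..N}. \<forall>j\<in>{1..n}. i mod n = j mod n \<longrightarrow> x i \<in> {v j, - v j}"
  proof (intro ballI impI)
    fix i j assume i: "i \<in> {1..N}" and j: "j \<in> {1..n}" and "i mod n = j mod n"
    then have "rr n i = j" using rr_iff[OF n1 _ j] by simp
    then show "x i \<in> {v j, - v j}" using xpm[of i] by simp
  qed
  have key: "(x i = v j \<longleftrightarrow> i mod n = j mod n \<and> pp n i < A j) \<and>
             (x i = - v j \<longleftrightarrow> i mod n = j mod n \<and> \<not> pp n i < A j)"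
    if i: "i \<in> {1..N}" and j: "j \<in> {1..n}" for i j
  proof -
    define r where "r = rr n i"
    have r: "r \<in> {1..n}" unfolding r_def by (rule rr_range[OF n1])
    have ir: "i mod n = j mod n \<longleftrightarrow> r = j" using rr_iff[OF n1 _ j] i by (simp add: r_def)
    have eq: "v r = v j \<longleftrightarrow> r = j" using inj r j by (auto dest: inj_onD)
    have vr: "v r \<in> v ` {1..n}" "v j \<in> v ` {1..n}" using r j by auto
    have ne1: "v r \<noteq> - v j" by (rule orthoset_neg[OF oB vr])
    have ne2: "- v r \<noteq> v j" using orthoset_neg[OF oB vr(2) vr(1)] by auto
    have nj: "- v r = - v j \<longleftrightarrow> r = j" using eq by auto
    show ?thesis
    proof (cases "pp n i < A r")
      case True
      then have "x i = v r" by (simp add: x_def r_def)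
      then show ?thesis using True ir eq ne1 by auto
    next
      case False
      then have "x i = - v r" by (simp add: x_def r_def)
      then show ?thesis using False ir nj ne2 by auto
    qed
  qed
  have "map_pmf x (pmf_of_set {1..N}) = \<mu>"
  proof (rule pmf_eqI)
    fix y
    have L: "pmf (map_pmf x (pmf_of_set {1..N})) y = real (card {i\<in>{1..N}. x i = y}) / real N"
      by (rule pmf_emp[OF N])
    show "pmf (map_pmf x (pmf_of_set {1..N})) y = pmf \<mu> y"
    proof (cases "y \<in> v ` {1..n}")
      case True
      then obtain j where j: "j \<in> {1..n}" "y = v j" by auto
      have S: "{i\<in>{1..N}. x i = y} = {i\<in>{1..N}. i mod n = j mod n \<and> pp n i < A j}"
        unfolding j(2) by (rule coll_eq) (rule conjunct1[OF key[OF _ j(1)]])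
      have ACj: "A j + C j = cnt n N j" using AC j(1) by (simp add: n_def)
      have "A j \<le> cnt n N j" using ACj by linarith
      then have "card {i\<in>{1..N}. x i = y} = A j" unfolding S by (rule card_sel_lt(1)[OF n1 j(1)])
      then show ?thesis using L pa j by (simp add: n_def)
    next
      case F: False
      show ?thesis
      proof (cases "y \<in> uminus ` v ` {1..n}")
        case True
        then obtain j where j: "j \<in> {1..n}" "y = - v j" by auto
        have S: "{i\<in>{1..N}. x i = y} = {i\<in>{1..N}. i mod n = j mod n \<and> \<not> pp n i < A j}"
          unfolding j(2) by (rule coll_eq) (rule conjunct2[OF key[OF _ j(1)]])
        have ACj: "A j + C j = cnt n N j" using AC j(1) by (simp add: n_def)
        have "A j \<le> cnt n N j" using ACj by linarith
        then have "card {i\<in>{1..N}. x i = y} = cnt n N j - A j" unfolding S by (rule card_sel_lt(2)[OF n1 j(1)])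
        also have "\<dots> = C j" using ACj by linarith
        finally show ?thesis using L pc j by (simp add: n_def)
      next
        case False
        have "{i\<in>{1..N}. x i = y} = {}"
        proof -
          have "x i \<noteq> y" for i
          proof -
            have "v (rr n i) \<in> v ` {1..n}" using rr_range[OF n1] by simp
            then show ?thesis using xpm[of i] F False by auto
          qed
          then show ?thesis by blast
        qed
        moreover have "y \<notin> set_pmf \<mu>" using supp F False by (auto simp: n_def)
        ultimately show ?thesis using L by (simp add: set_pmf_eq)
      qed
    qed
  qed
  then show ?thesis
    unfolding cross_config_def n_def[symmetric]
    apply (rule_tac exI[of _ v], rule_tac exI[of _ x])
    using v' xs pat by (intro conjI) auto
qed

lemma obs_of_bij:
  fixes B :: "'a::euclidean_space set"
  assumes B: "orthoset B" "span B = UNIV" and h: "bij_betw v {1..n} B"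
  shows "orthonormal_basis_seq n v"
proof -
  have inj: "inj_on v {1..n}" and im: "v ` {1..n} = B" using h by (auto simp: bij_betw_def)
  show ?thesis
    unfolding orthonormal_basis_seq_def
  proof (intro conjI ballI)
    fix i j assume ij: "i \<in> {1..n}" "j \<in> {1..n}"
    then have "v i \<in> B" "v j \<in> B" using im by auto
    moreover have "v i = v j \<longleftrightarrow> i = j" using inj ij by (auto dest: inj_onD)
    ultimately show "v i \<bullet> v j = (if i = j then 1 else 0)" using orthoset_inner[OF B(1)] by simp
  next
    show "span (v ` {1..n}) = UNIV" using im B(2) by simp
  qed
qed

lemma bij_shift:
  fixes r n :: nat
  assumes "r \<le> n"
  shows "bij_betw (\<lambda>j. j - r) {r+1..n} {1..n-r}"
proof (rule bij_betw_imageI)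
  show "inj_on (\<lambda>j. j - r) {r + 1..n}" by (auto simp: inj_on_def)
  show "(\<lambda>j. j - r) ` {r + 1..n} = {1..n - r}"
  proof (intro equalityI subsetI)
    fix k assume "k \<in> (\<lambda>j. j - r) ` {r + 1..n}" then show "k \<in> {1..n - r}" by auto
  next
    fix k assume k: "k \<in> {1..n - r}"
    then have "k + r \<in> {r+1..n}" using assms by auto
    moreover have "k = (k + r) - r" by simp
    ultimately show "k \<in> (\<lambda>j. j - r) ` {r + 1..n}" by blast
  qed
qed

lemma maximizer_cc:
  fixes \<mu> :: "'a::euclidean_space pmf" and N :: nat
  assumes N: "1 \<le> N" and P: "\<mu> \<in> P_eq N" and g: "goodset (set_pmf \<mu>)"
    and e: "energy 1 \<mu> = EA DIM('a) N"
  shows "cross_config N \<mu>"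
proof -
  define n where "n = DIM('a)"
  have n1: "1 \<le> n" by (simp add: n_def DIM_positive Suc_leI)
  obtain x where mu: "\<mu> = map_pmf x (pmf_of_set {1..N})" and xs: "\<forall>i\<in>{1..N}. x i \<in> sphere 0 1"
    using P unfolding P_eq_def by blast
  have Pf: "\<mu> \<in> P_fin" by (rule Peq_Pfin[OF N P])
  have fin: "finite (set_pmf \<mu>)" and sph: "set_pmf \<mu> \<subseteq> sphere 0 1" using Pf by (auto simp: P_fin_def)
  obtain B where oB: "orthoset B" and cB: "card B = n" and spB: "span B = UNIV"
    and supp: "set_pmf \<mu> \<subseteq> B \<union> uminus ` B"
    using good_to_basis[OF fin sph g] unfolding n_def by blast
  have finB: "finite B" using oB by (simp add: orthoset_def)
  define c where "c b = card {i\<in>{1..N}. x i = b} + card {i\<in>{1..N}. x i = - b}" for b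
  have mc: "pmf \<mu> b + pmf \<mu> (- b) = real (c b) / real N" for b
    unfolding mu pmf_emp[OF N] c_def by (simp add: add_divide_distrib)
  define q where "q = N div n"
  define r where "r = N mod n"
  define Bal where "Bal = n * q^2 + 2 * q * r + r"
  have Npos: "real N > 0" using N by simp
  have "1/2 * (1 - (\<Sum>b\<in>B. (real (c b) / real N)^2)) = 1/2 * (1 - real Bal / (real N)^2)"
    using energy_orthoset[OF oB supp, of 1] e unfolding mc by (simp add: EA_def Bal_def q_def r_def n_def)
  moreover have "\<And>X Y::real. 1/2 * (1 - X) = 1/2 * (1 - Y) \<Longrightarrow> X = Y" by simp
  ultimately have "(\<Sum>b\<in>B. (real (c b) / real N)^2) = real Bal / (real N)^2" by blast
  then have "(\<Sum>b\<in>B. real ((c b)^2)) / (real N)^2 = real Bal / (real N)^2"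
    by (simp add: power_divide sum_divide_distrib)
  then have "real (\<Sum>b\<in>B. (c b)^2) = real Bal" using Npos by (simp add: divide_cancel_right)
  then have sq: "(\<Sum>b\<in>B. (c b)^2) = n * (N div n)^2 + 2 * (N div n) * (N mod n) + N mod n"
    unfolding Bal_def q_def r_def by (simp only: of_nat_eq_iff)
  have "(\<Sum>b\<in>B. real (c b) / real N) = 1" using sum_m_one[OF oB supp] unfolding mc .
  then have "real (\<Sum>b\<in>B. c b) / real N = 1" by (simp add: sum_divide_distrib)
  then have "real (\<Sum>b\<in>B. c b) = real N" using Npos by (simp add: divide_eq_1_iff del: of_nat_sum)
  then have s: "(\<Sum>b\<in>B. c b) = N" by (simp only: of_nat_eq_iff)
  have bal: "\<forall>b\<in>B. c b = q \<or> c b = q + 1" using balanced[OF finB cB n1 s sq] by (simp add: q_def)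
  define Bb where "Bb = {b\<in>B. c b = q + 1}"
  have cBb: "card Bb = r" using card_big[OF finB cB n1 s] bal unfolding Bb_def q_def r_def by blast
  have rn: "r < n" using n1 by (simp add: r_def)
  have finBb: "finite Bb" using finB by (simp add: Bb_def)
  have cBs: "card (B - Bb) = n - r" using cB cBb finB by (simp add: card_Diff_subset Bb_def)
  obtain v1 :: "nat \<Rightarrow> 'a" where v1: "bij_betw v1 {1..r} Bb"
    using ex_bij_betw_nat_finite_1[OF finBb] cBb by auto
  have finBs: "finite (B - Bb)" using finB by simp
  obtain v2 :: "nat \<Rightarrow> 'a" where v2: "bij_betw v2 {1..n-r} (B - Bb)"
    using ex_bij_betw_nat_finite_1[OF finBs] cBs by auto
  define v where "v j = (if j \<le> r then v1 j else v2 (j - r))" for j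
  have b1: "bij_betw v {1..r} Bb"
    using v1 by (rule bij_betw_cong[THEN iffD1, rotated]) (auto simp: v_def)
  have "bij_betw (v2 \<circ> (\<lambda>j. j - r)) {r+1..n} (B - Bb)"
    using bij_betw_trans[OF bij_shift[of r n] v2] rn by simp
  then have b2: "bij_betw v {r+1..n} (B - Bb)"
    by (rule bij_betw_cong[THEN iffD1, rotated]) (auto simp: v_def)
  have "bij_betw v ({1..r} \<union> {r+1..n}) (Bb \<union> (B - Bb))"
    by (rule bij_betw_combine[OF b1 b2]) blast
  moreover have "{1..r} \<union> {r+1..n} = {1..n}" using rn by auto
  moreover have "Bb \<union> (B - Bb) = B" by (auto simp: Bb_def)
  ultimately have bv: "bij_betw v {1..n} B" by simp
  have v: "orthonormal_basis_seq n v" by (rule obs_of_bij[OF oB spB bv])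
  have imv: "v ` {1..n} = B" using bv by (simp add: bij_betw_def)
  have cv: "c (v j) = cnt n N j" if j: "j \<in> {1..n}" for j
  proof -
    have ck: "cnt n N j = (if j \<le> r then q + 1 else q)"
      using cnt_KK[OF n1 j] KK_closed[OF n1 j] by (simp add: q_def r_def)
    show ?thesis
    proof (cases "j \<le> r")
      case True
      then have "v j \<in> Bb" using b1 j by (auto simp: bij_betw_def)
      then show ?thesis using ck True by (simp add: Bb_def)
    next
      case False
      then have "j \<in> {r+1..n}" using j by auto
      then have "v j \<in> B - Bb" using b2 by (auto simp: bij_betw_def)
      then have "c (v j) = q" using bal by (auto simp: Bb_def)
      then show ?thesis using ck False by simp
    qed
  qed
  define A where "A j = card {i\<in>{1..N}. x i = v j}" for j
  define C where "C j = card {i\<in>{1..N}. x i = - v j}" for j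
  show ?thesis
  proof (rule counts_cc[OF N, of v A C])
    show "orthonormal_basis_seq DIM('a) v" using v by (simp add: n_def)
    show "\<forall>j\<in>{1..DIM('a)}. A j + C j = cnt DIM('a) N j"
      using cv by (simp add: A_def C_def c_def n_def)
    show "set_pmf \<mu> \<subseteq> v ` {1..DIM('a)} \<union> uminus ` v ` {1..DIM('a)}"
      using supp imv by (simp add: n_def)
    show "\<forall>j\<in>{1..DIM('a)}. pmf \<mu> (v j) = real (A j) / real N"
      unfolding mu pmf_emp[OF N] A_def by simp
    show "\<forall>j\<in>{1..DIM('a)}. pmf \<mu> (- v j) = real (C j) / real N"
      unfolding mu pmf_emp[OF N] C_def by simp
  qed
qed

lemma partA_dir1:
  fixes \<mu> :: "'a::euclidean_space pmf" and N :: nat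
  assumes C1: "\<forall>N::nat\<ge>1. \<forall>\<mu>::'a pmf. cross_config N \<mu> \<longrightarrow> maximizes 1 (P_eq N) \<mu>"
    and a: "1 < a" and N: "1 \<le> N"
  shows "maximizes a (P_eq N) \<mu> \<longleftrightarrow> cross_config N \<mu>"
proof
  assume cc: "cross_config N \<mu>"
  have a0: "0 < a" using a by simp
  have P: "\<mu> \<in> P_eq N" and ea: "energy a \<mu> = EA DIM('a) N"
    using cross_config_energy[OF N cc a0] by auto
  have e1: "energy 1 \<mu> = EA DIM('a) N" using cross_config_energy[OF N cc] by simp
  have m1: "maximizes 1 (P_eq N) \<mu>" using C1 cc N by blast
  show "maximizes a (P_eq N) \<mu>"
    unfolding maximizes_def
  proof (intro conjI ballI)
    show "\<mu> \<in> P_eq N" by (rule P)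
    fix \<nu> :: "'a pmf" assume \<nu>: "\<nu> \<in> P_eq N"
    have "energy a \<nu> \<le> energy 1 \<nu>" using energy_le_1[OF Peq_Pfin[OF N \<nu>]] a by simp
    also have "\<dots> \<le> energy 1 \<mu>" using m1 \<nu> by (auto simp: maximizes_def)
    finally show "energy a \<nu> \<le> energy a \<mu>" using ea e1 by simp
  qed
next
  assume m: "maximizes a (P_eq N) \<mu>"
  then have P: "\<mu> \<in> P_eq N" and le: "\<And>\<nu>::'a pmf. \<nu> \<in> P_eq N \<Longrightarrow> energy a \<nu> \<le> energy a \<mu>"
    by (auto simp: maximizes_def)
  have Pf: "\<mu> \<in> P_fin" by (rule Peq_Pfin[OF N P])
  obtain \<mu>0 :: "'a pmf" where cc0: "cross_config N \<mu>0" using exists_cross_config[OF N] by blast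
  have a0: "0 < a" using a by simp
  have P0: "\<mu>0 \<in> P_eq N" and ea0: "energy a \<mu>0 = EA DIM('a) N"
    using cross_config_energy[OF N cc0 a0] by auto
  have e10: "energy 1 \<mu>0 = EA DIM('a) N" using cross_config_energy[OF N cc0] by simp
  have m10: "maximizes 1 (P_eq N) \<mu>0" using C1 cc0 N by blast
  have "energy a \<mu>0 \<le> energy a \<mu>" using le P0 by blast
  moreover have "energy a \<mu> \<le> energy 1 \<mu>" using energy_le_1[OF Pf] a by simp
  moreover have "energy 1 \<mu> \<le> energy 1 \<mu>0" using m10 P by (auto simp: maximizes_def)
  ultimately have eq1: "energy a \<mu> = energy 1 \<mu>" and eq2: "energy 1 \<mu> = EA DIM('a) N"
    using ea0 e10 by linarith+
  have g: "goodset (set_pmf \<mu>)" using energy_eq_good[OF Pf a eq1] .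
  show "cross_config N \<mu>" by (rule maximizer_cc[OF N P g eq2])
qed

lemma partA_dir2:
  fixes \<mu> :: "'a::euclidean_space pmf" and N :: nat
  assumes C2: "\<forall>a::real>1. \<forall>N::nat\<ge>1. \<forall>\<mu>::'a pmf. maximizes a (P_eq N) \<mu> \<longleftrightarrow> cross_config N \<mu>"
    and N: "1 \<le> N" and cc: "cross_config N \<mu>"
  shows "maximizes 1 (P_eq N) \<mu>"
  unfolding maximizes_def
proof (intro conjI ballI)
  show P: "\<mu> \<in> P_eq N" using cross_config_energy(1)[OF N cc, of 1] by simp
  fix \<nu> :: "'a pmf" assume \<nu>: "\<nu> \<in> P_eq N"
  have "energy 1 \<nu> \<le> EA DIM('a) N"
  proof (rule energy_limit_bound[OF Peq_Pfin[OF N \<nu>]])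
    fix a :: real assume a: "1 < a"
    then have "maximizes a (P_eq N) \<mu>" using C2 cc N by blast
    then have "energy a \<nu> \<le> energy a \<mu>" using \<nu> by (auto simp: maximizes_def)
    also have "energy a \<mu> = EA DIM('a) N" using cross_config_energy(2)[OF N cc] a by simp
    finally show "energy a \<nu> \<le> EA DIM('a) N" .
  qed
  also have "\<dots> = energy 1 \<mu>" using cross_config_energy(2)[OF N cc, of 1] by simp
  finally show "energy 1 \<nu> \<le> energy 1 \<mu>" .
qed

lemma partA:
  "((\<forall>N::nat\<ge>1. \<forall>\<mu>::'a::euclidean_space pmf. cross_config N \<mu> \<longrightarrow> maximizes 1 (P_eq N) \<mu>)
    \<longleftrightarrow> (\<forall>\<alpha>::real>1. \<forall>N::nat\<ge>1. \<forall>\<mu>::'a pmf. maximizes \<alpha> (P_eq N) \<mu> \<longleftrightarrow> cross_config N \<mu>))"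
proof
  assume C1: "\<forall>N::nat\<ge>1. \<forall>\<mu>::'a pmf. cross_config N \<mu> \<longrightarrow> maximizes 1 (P_eq N) \<mu>"
  show "\<forall>\<alpha>::real>1. \<forall>N::nat\<ge>1. \<forall>\<mu>::'a pmf. maximizes \<alpha> (P_eq N) \<mu> \<longleftrightarrow> cross_config N \<mu>"
    using partA_dir1[OF C1] by blast
next
  assume C2: "\<forall>\<alpha>::real>1. \<forall>N::nat\<ge>1. \<forall>\<mu>::'a pmf. maximizes \<alpha> (P_eq N) \<mu> \<longleftrightarrow> cross_config N \<mu>"
  show "\<forall>N::nat\<ge>1. \<forall>\<mu>::'a pmf. cross_config N \<mu> \<longrightarrow> maximizes 1 (P_eq N) \<mu>"
    using partA_dir2[OF C2] by blast
qed

theorem proposition1p3: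
  shows "((\<forall>N::nat\<ge>1. \<forall>\<mu>::(real^'n) pmf. cross_config N \<mu> \<longrightarrow> maximizes 1 (P_eq N) \<mu>)
          \<longleftrightarrow> (\<forall>\<alpha>::real>1. \<forall>N::nat\<ge>1. \<forall>\<mu>::(real^'n) pmf.
                 maximizes \<alpha> (P_eq N) \<mu> \<longleftrightarrow> cross_config N \<mu>))
       \<and> ((\<forall>\<mu>::(real^'n) pmf. cross_weights \<mu> \<longrightarrow> maximizes 1 P_fin \<mu>)
          \<longleftrightarrow> (\<forall>\<alpha>::real>1. \<forall>\<mu>::(real^'n) pmf. maximizes \<alpha> P_fin \<mu> \<longleftrightarrow> cross_weights \<mu>))"
  using partA[where 'a="real^'n"] partB[where 'a="real^'n"] by (intro conjI)

end
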